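(* The element $C=\sum_{i}C_i$ is central in the frozen Jacobian algebra $\Gamma_\sigma$.
   Context: $K$ a field. $P$: regular polygon with vertices $P_1,\dots,P_n$ ($n\ge3$) counterclockwise; $\sigma$: triangulation (maximal set of non-crossing diagonals). $Q_\sigma$: vertices = edges of $\sigma$ (sides and diagonals); internal arrow $a\to b$ when $a,b$ are sides of a common triangle and $a$ precedes $b$ anticlockwise around their common vertex; external arrow $a\to b$ between the two sides of $P$ at each polygon vertex incident to a diagonal, $a$ preceding $b$ anticlockwise. Minimal cycles (no repeated arrows, enclosing a region with connected interior containing no arrows) are cyclic triangles (three internal arrows in a triangle) and big cycles (internal arrows and one external arrow around a vertex of $P$). $W_\sigma=\sum$cyclic triangles$-\sum$big cycles; $F$ = vertices given by sides; $\Gamma_\sigma=KQ_\sigma/J$, $J$ generated by cyclic derivatives $\partial_aW_\sigma$ ($\partial_a(a_1\cdots a_d)=\sum_{a_i=a}a_{i+1}\cdots a_da_1\cdots a_{i-1}$) for arrows $a$ with source or target outside $F$. For each vertex $i$, all minimal cycles passing through $i$ (read as cycles at $i$) are equal in $\Gamma_\sigma$; $C_i$ denotes this common element. *)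

theory Defs
  imports Main
begin

text \<open>Polygon vertices P_1..P_n are encoded as 0..n-1 (counterclockwise).
  An edge (side or diagonal) between vertices i and j is the pair (i,j) with i < j.\<close>

type_synonym edge = "nat \<times> nat"
type_synonym qpath = "edge list"

definition edg :: "nat \<Rightarrow> nat \<Rightarrow> edge" where
  "edg a b = (min a b, max a b)"

definition prv :: "nat \<Rightarrow> nat \<Rightarrow> nat" where
  "prv n i = (i + n - 1) mod n"

definition nxt :: "nat \<Rightarrow> nat \<Rightarrow> nat" where
  "nxt n i = (i + 1) mod n"

definition is_side :: "nat \<Rightarrow> edge \<Rightarrow> bool" where
  "is_side n e \<longleftrightarrow> fst e < snd e \<and> snd e < n \<and>
     (snd e = fst e + 1 \<or> (fst e = 0 \<and> snd e = n - 1))"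

definition is_diag :: "nat \<Rightarrow> edge \<Rightarrow> bool" where
  "is_diag n e \<longleftrightarrow> fst e < snd e \<and> snd e < n \<and> \<not> is_side n e"

definition crosses :: "edge \<Rightarrow> edge \<Rightarrow> bool" where
  "crosses d e \<longleftrightarrow> (fst d < fst e \<and> fst e < snd d \<and> snd d < snd e) \<or>
                     (fst e < fst d \<and> fst d < snd e \<and> snd e < snd d)"

definition triangulation :: "nat \<Rightarrow> edge set \<Rightarrow> bool" where
  "triangulation n \<sigma> \<longleftrightarrow> (\<forall>d\<in>\<sigma>. is_diag n d) \<and> (\<forall>d\<in>\<sigma>. \<forall>e\<in>\<sigma>. \<not> crosses d e) \<and>
     (\<forall>d. is_diag n d \<and> d \<notin> \<sigma> \<longrightarrow> (\<exists>e\<in>\<sigma>. crosses d e))"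

text \<open>Vertices of the quiver: sides and diagonals of the triangulation.\<close>
definition edges :: "nat \<Rightarrow> edge set \<Rightarrow> edge set" where
  "edges n \<sigma> = {e. is_side n e} \<union> \<sigma>"

definition sides :: "nat \<Rightarrow> edge set" where
  "sides n = {e. is_side n e}"

definition triangles :: "nat \<Rightarrow> edge set \<Rightarrow> (nat \<times> nat \<times> nat) set" where
  "triangles n \<sigma> = {(p,q,r). p < q \<and> q < r \<and> r < n \<and>
      (p,q) \<in> edges n \<sigma> \<and> (q,r) \<in> edges n \<sigma> \<and> (p,r) \<in> edges n \<sigma>}"

text \<open>Cyclic triangle of the triangle p<q<r, as a cyclic sequence of quiver vertices
  (arrows go from each entry to the next, and from the last to the first).\<close>
definition tri_cycle :: "nat \<times> nat \<times> nat \<Rightarrow> edge list" where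
  "tri_cycle t = (case t of (p,q,r) \<Rightarrow> [(q,r),(p,q),(p,r)])"

definition cyc_arrows :: "edge list \<Rightarrow> (edge \<times> edge) set" where
  "cyc_arrows c = {(c ! k, c ! ((k + 1) mod length c)) | k. k < length c}"

definition ext_vertices :: "nat \<Rightarrow> edge set \<Rightarrow> nat set" where
  "ext_vertices n \<sigma> = {i. i < n \<and> (\<exists>d\<in>\<sigma>. fst d = i \<or> snd d = i)}"

text \<open>Neighbours of polygon vertex i in the triangulation, in anticlockwise order
  starting at the next vertex and ending at the previous vertex.\<close>
definition fan :: "nat \<Rightarrow> edge set \<Rightarrow> nat \<Rightarrow> nat list" where
  "fan n \<sigma> i = sort_key (\<lambda>w. (w + n - i) mod n)
      (sorted_list_of_set {w. w < n \<and> edg i w \<in> edges n \<sigma>})"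

text \<open>Big cycle around polygon vertex i: internal arrows around i followed by the
  external arrow closing the cycle.\<close>
definition big_cycle :: "nat \<Rightarrow> edge set \<Rightarrow> nat \<Rightarrow> edge list" where
  "big_cycle n \<sigma> i = map (edg i) (fan n \<sigma> i)"

definition int_arrows :: "nat \<Rightarrow> edge set \<Rightarrow> (edge \<times> edge) set" where
  "int_arrows n \<sigma> = (\<Union>t\<in>triangles n \<sigma>. cyc_arrows (tri_cycle t))"

definition ext_arrows :: "nat \<Rightarrow> edge set \<Rightarrow> (edge \<times> edge) set" where
  "ext_arrows n \<sigma> = {(edg (prv n i) i, edg i (nxt n i)) | i. i \<in> ext_vertices n \<sigma>}"

definition arrows :: "nat \<Rightarrow> edge set \<Rightarrow> (edge \<times> edge) set" where
  "arrows n \<sigma> = int_arrows n \<sigma> \<union> ext_arrows n \<sigma>"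

definition min_cycles :: "nat \<Rightarrow> edge set \<Rightarrow> edge list set" where
  "min_cycles n \<sigma> = tri_cycle ` triangles n \<sigma> \<union> big_cycle n \<sigma> ` ext_vertices n \<sigma>"

text \<open>Paths of the quiver, as nonempty sequences of quiver vertices joined by arrows
  (the quiver has no multiple arrows). A one-element list is a trivial path.\<close>
definition valid_path :: "nat \<Rightarrow> edge set \<Rightarrow> qpath \<Rightarrow> bool" where
  "valid_path n \<sigma> p \<longleftrightarrow> p \<noteq> [] \<and> set p \<subseteq> edges n \<sigma> \<and>
     (\<forall>k. Suc k < length p \<longrightarrow> (p ! k, p ! Suc k) \<in> arrows n \<sigma>)"

definition KQ :: "nat \<Rightarrow> edge set \<Rightarrow> (qpath \<Rightarrow> 'k::field) set" where
  "KQ n \<sigma> = {x. finite {p. x p \<noteq> 0} \<and> (\<forall>p. x p \<noteq> 0 \<longrightarrow> valid_path n \<sigma> p)}"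

definition pmul :: "(qpath \<Rightarrow> 'k::field) \<Rightarrow> (qpath \<Rightarrow> 'k) \<Rightarrow> qpath \<Rightarrow> 'k" where
  "pmul x y = (\<lambda>r. \<Sum>(p,q)\<in>{p. x p \<noteq> 0} \<times> {q. y q \<noteq> 0}.
       if p \<noteq> [] \<and> q \<noteq> [] \<and> last p = hd q \<and> p @ tl q = r then x p * y q else 0)"

definition single :: "qpath \<Rightarrow> qpath \<Rightarrow> 'k::field" where
  "single p = (\<lambda>r. if r = p then 1 else 0)"

text \<open>Cyclic derivative of the cyclic word given by the cyclic vertex sequence c
  with respect to arrow a: for each occurrence a = a_k, the path a_{k+1}...a_{k-1}.\<close>
definition cycderiv :: "edge \<times> edge \<Rightarrow> edge list \<Rightarrow> qpath \<Rightarrow> 'k::field" where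
  "cycderiv a c = (\<lambda>r. \<Sum>k<length c.
      if (c ! k, c ! ((k + 1) mod length c)) = a \<and> rotate (Suc k) c = r then 1 else 0)"

text \<open>Cyclic derivative of W = sum of cyclic triangles - sum of big cycles.\<close>
definition dW :: "nat \<Rightarrow> edge set \<Rightarrow> edge \<times> edge \<Rightarrow> qpath \<Rightarrow> 'k::field" where
  "dW n \<sigma> a = (\<lambda>r. (\<Sum>t\<in>triangles n \<sigma>. cycderiv a (tri_cycle t) r)
                   - (\<Sum>i\<in>ext_vertices n \<sigma>. cycderiv a (big_cycle n \<sigma> i) r))"

definition relations :: "nat \<Rightarrow> edge set \<Rightarrow> (qpath \<Rightarrow> 'k::field) set" where
  "relations n \<sigma> = {dW n \<sigma> a | a. a \<in> arrows n \<sigma> \<and>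
       (fst a \<notin> sides n \<or> snd a \<notin> sides n)}"

inductive_set gen_ideal :: "nat \<Rightarrow> edge set \<Rightarrow> (qpath \<Rightarrow> 'k::field) set \<Rightarrow> (qpath \<Rightarrow> 'k) set"
  for n \<sigma> R where
  zero: "(\<lambda>_. 0) \<in> gen_ideal n \<sigma> R"
| base: "\<rho> \<in> R \<Longrightarrow> \<rho> \<in> gen_ideal n \<sigma> R"
| add: "a \<in> gen_ideal n \<sigma> R \<Longrightarrow> b \<in> gen_ideal n \<sigma> R \<Longrightarrow> (\<lambda>r. a r + b r) \<in> gen_ideal n \<sigma> R"
| smul: "a \<in> gen_ideal n \<sigma> R \<Longrightarrow> (\<lambda>r. c * a r) \<in> gen_ideal n \<sigma> R"
| lmul: "a \<in> gen_ideal n \<sigma> R \<Longrightarrow> x \<in> KQ n \<sigma> \<Longrightarrow> pmul x a \<in> gen_ideal n \<sigma> R"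
| rmul: "a \<in> gen_ideal n \<sigma> R \<Longrightarrow> x \<in> KQ n \<sigma> \<Longrightarrow> pmul a x \<in> gen_ideal n \<sigma> R"

definition jacobian_ideal :: "nat \<Rightarrow> edge set \<Rightarrow> (qpath \<Rightarrow> 'k::field) set" where
  "jacobian_ideal n \<sigma> = gen_ideal n \<sigma> (relations n \<sigma>)"

definition is_min_cycle_at :: "nat \<Rightarrow> edge set \<Rightarrow> edge \<Rightarrow> qpath \<Rightarrow> bool" where
  "is_min_cycle_at n \<sigma> v p \<longleftrightarrow>
     (\<exists>c\<in>min_cycles n \<sigma>. \<exists>k<length c. c ! k = v \<and> p = rotate k c @ [v])"

end

theory Submission
  imports Defs
begin


lemma pmul_eq:
  assumes "finite S" "{p. x p \<noteq> 0} \<subseteq> S" "finite T" "{q. y q \<noteq> 0} \<subseteq> T"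
  shows "pmul x y r = (\<Sum>(p,q)\<in>S\<times>T. if p \<noteq> [] \<and> q \<noteq> [] \<and> last p = hd q \<and> p @ tl q = r then x p * y q else (0::'k::field))"
  unfolding pmul_def
  apply (rule sum.mono_neutral_left)
  using assms by (auto split: if_splits intro: finite_subset)

definition cnd :: "qpath \<Rightarrow> qpath \<Rightarrow> qpath \<Rightarrow> 'k::field" where
  "cnd p q r = (if p \<noteq> [] \<and> q \<noteq> [] \<and> last p = hd q \<and> p @ tl q = r then 1 else 0)"

lemma pmul_lin0:
  fixes c d :: "_ \<Rightarrow> 'k::field"
  assumes A: "finite A" and B: "finite B"
  shows "pmul (\<lambda>r. \<Sum>a\<in>A. c a * single (P a) r) (\<lambda>r. \<Sum>b\<in>B. d b * single (Q b) r) r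
     = (\<Sum>a\<in>A. \<Sum>b\<in>B. c a * d b * cnd (P a) (Q b) r)"
proof -
  let ?x = "\<lambda>r. \<Sum>a\<in>A. c a * single (P a) r"
  let ?y = "\<lambda>r. \<Sum>b\<in>B. d b * single (Q b) r"
  have sx: "{p. ?x p \<noteq> 0} \<subseteq> P ` A"
  proof
    fix p assume "p \<in> {p. ?x p \<noteq> 0}"
    then have "(\<Sum>a\<in>A. c a * single (P a) p) \<noteq> 0" by simp
    then obtain a where "a \<in> A" "c a * single (P a) p \<noteq> 0" by (meson sum.neutral)
    then show "p \<in> P ` A" by (auto simp: single_def split: if_splits)
  qed
  have sy: "{p. ?y p \<noteq> 0} \<subseteq> Q ` B"
  proof
    fix p assume "p \<in> {p. ?y p \<noteq> 0}"
    then have "(\<Sum>b\<in>B. d b * single (Q b) p) \<noteq> 0" by simp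
    then obtain b where "b \<in> B" "d b * single (Q b) p \<noteq> 0" by (meson sum.neutral)
    then show "p \<in> Q ` B" by (auto simp: single_def split: if_splits)
  qed
  have "pmul ?x ?y r = (\<Sum>(p,q)\<in>P ` A \<times> Q ` B. cnd p q r * (?x p * ?y q))"
    by (subst pmul_eq[OF _ sx _ sy]) (auto simp: A B cnd_def intro!: sum.cong)
  also have "\<dots> = (\<Sum>pq\<in>P ` A \<times> Q ` B. \<Sum>a\<in>A. \<Sum>b\<in>B. cnd (fst pq) (snd pq) r * c a * d b * single (P a) (fst pq) * single (Q b) (snd pq))"
    apply (rule sum.cong[OF refl]) apply (auto simp: sum_product sum_distrib_left mult_ac intro!: sum.cong)
    apply (subst sum.swap) by (simp add: mult_ac)
  also have "\<dots> = (\<Sum>a\<in>A. \<Sum>b\<in>B. \<Sum>pq\<in>P ` A \<times> Q ` B. cnd (fst pq) (snd pq) r * c a * d b * single (P a) (fst pq) * single (Q b) (snd pq))"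
    apply (subst sum.swap[where A="P ` A \<times> Q ` B"]) apply (rule sum.cong, simp) apply (subst sum.swap[where A="P ` A \<times> Q ` B"]) by simp
  also have "\<dots> = (\<Sum>a\<in>A. \<Sum>b\<in>B. c a * d b * cnd (P a) (Q b) r)"
  proof (rule sum.cong[OF refl], rule sum.cong[OF refl])
    fix a b assume ab: "a \<in> A" "b \<in> B"
    have "(\<Sum>pq\<in>P ` A \<times> Q ` B. cnd (fst pq) (snd pq) r * c a * d b * single (P a) (fst pq) * single (Q b) (snd pq))
       = (\<Sum>pq\<in>P ` A \<times> Q ` B. if pq = (P a, Q b) then cnd (P a) (Q b) r * c a * d b else 0)"
      by (rule sum.cong) (auto simp: single_def)
    also have "\<dots> = cnd (P a) (Q b) r * c a * d b"
      using ab A B by (simp add: sum.delta' split_def)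
    finally show "(\<Sum>pq\<in>P ` A \<times> Q ` B. cnd (fst pq) (snd pq) r * c a * d b * single (P a) (fst pq) * single (Q b) (snd pq)) = c a * d b * cnd (P a) (Q b) r"
      by (simp add: mult_ac)
  qed
  finally show ?thesis .
qed

lemma pmul_lin:
  fixes c d :: "_ \<Rightarrow> 'k::field"
  assumes "finite A" "finite B" "x = (\<lambda>r. \<Sum>a\<in>A. c a * single (P a) r)" "y = (\<lambda>r. \<Sum>b\<in>B. d b * single (Q b) r)"
  shows "pmul x y r = (\<Sum>a\<in>A. \<Sum>b\<in>B. c a * d b * cnd (P a) (Q b) r)"
  using pmul_lin0[OF assms(1,2)] assms(3,4) by simp

lemma gi_diff: "a \<in> gen_ideal n \<sigma> R \<Longrightarrow> b \<in> gen_ideal n \<sigma> R \<Longrightarrow> (\<lambda>r. a r - b r) \<in> gen_ideal n \<sigma> R"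
proof -
  assume a: "a \<in> gen_ideal n \<sigma> R" and b: "b \<in> gen_ideal n \<sigma> R"
  have "(\<lambda>r. (-1) * b r) \<in> gen_ideal n \<sigma> R" by (rule gen_ideal.smul[OF b])
  from gen_ideal.add[OF a this] show ?thesis by simp
qed

lemma gi_sum: "finite S \<Longrightarrow> (\<forall>q\<in>S. f q \<in> gen_ideal n \<sigma> R) \<Longrightarrow> (\<lambda>r. \<Sum>q\<in>S. c q * f q r) \<in> gen_ideal n \<sigma> R"
proof (induction S rule: finite_induct)
  case empty then show ?case using gen_ideal.zero by simp
next
  case (insert x F)
  then have "(\<lambda>r. c x * f x r) \<in> gen_ideal n \<sigma> R" by (auto intro: gen_ideal.smul)
  from gen_ideal.add[OF this] insert show ?case by simp
qed

definition Eqv :: "'k::field itself \<Rightarrow> nat \<Rightarrow> edge set \<Rightarrow> qpath \<Rightarrow> qpath \<Rightarrow> bool" where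
  "Eqv K n \<sigma> p q \<longleftrightarrow> ((\<lambda>r. single p r - single q r) :: qpath \<Rightarrow> 'k) \<in> jacobian_ideal n \<sigma>"

lemma Eqv_refl: "Eqv K n \<sigma> p p"
  unfolding Eqv_def jacobian_ideal_def using gen_ideal.zero by simp

lemma Eqv_sym: "Eqv K n \<sigma> p q \<Longrightarrow> Eqv K n \<sigma> q p"
  unfolding Eqv_def jacobian_ideal_def
  by (drule gen_ideal.smul[where c="-1"]) simp

lemma Eqv_trans: "Eqv K n \<sigma> p q \<Longrightarrow> Eqv K n \<sigma> q w \<Longrightarrow> Eqv K n \<sigma> p w"
  unfolding Eqv_def jacobian_ideal_def
  by (drule (1) gen_ideal.add) simp

lemma single_KQ: "valid_path n \<sigma> s \<Longrightarrow> single s \<in> KQ n \<sigma>"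
  unfolding KQ_def by (auto simp: single_def split: if_splits)

lemma single_as_sum: "single p = (\<lambda>r. \<Sum>a\<in>{()}. 1 * single p r)" by simp

lemma diff_as_sum: "(\<lambda>r. single p1 r - single p2 r) = (\<lambda>r. \<Sum>a\<in>{True,False}. (if a then 1 else -1) * single (if a then p1 else p2) r :: 'k::field)"
  by simp

lemma Eqv_rmul:
  assumes "Eqv (K::'k::field itself) n \<sigma> p1 p2" "valid_path n \<sigma> s" "p1 \<noteq> []" "p2 \<noteq> []"
    "last p1 = hd s" "last p2 = hd s"
  shows "Eqv K n \<sigma> (p1 @ tl s) (p2 @ tl s)"
proof -
  have "pmul ((\<lambda>r. single p1 r - single p2 r) :: qpath \<Rightarrow> 'k) (single s) \<in> jacobian_ideal n \<sigma>"
    using assms(1) single_KQ[OF assms(2)] unfolding Eqv_def jacobian_ideal_def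
    by (rule gen_ideal.rmul)
  also have "pmul ((\<lambda>r. single p1 r - single p2 r) :: qpath \<Rightarrow> 'k) (single s) = (\<lambda>r. single (p1 @ tl s) r - single (p2 @ tl s) r)"
    apply (rule ext, subst pmul_lin[where A="{True,False}" and B="{()}", OF _ _ diff_as_sum single_as_sum])
    using assms(2-) by (auto simp: cnd_def single_def valid_path_def)
  finally show ?thesis unfolding Eqv_def .
qed

lemma Eqv_lmul:
  assumes "Eqv (K::'k::field itself) n \<sigma> p1 p2" "valid_path n \<sigma> s" "p1 \<noteq> []" "p2 \<noteq> []"
    "hd p1 = last s" "hd p2 = last s"
  shows "Eqv K n \<sigma> (s @ tl p1) (s @ tl p2)"
proof -
  have "pmul (single s) ((\<lambda>r. single p1 r - single p2 r) :: qpath \<Rightarrow> 'k) \<in> jacobian_ideal n \<sigma>"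
    using assms(1) single_KQ[OF assms(2)] unfolding Eqv_def jacobian_ideal_def
    by (rule gen_ideal.lmul)
  also have "pmul (single s) ((\<lambda>r. single p1 r - single p2 r) :: qpath \<Rightarrow> 'k) = (\<lambda>r. single (s @ tl p1) r - single (s @ tl p2) r)"
    apply (rule ext, subst pmul_lin[where B="{True,False}" and A="{()}", OF _ _ single_as_sum diff_as_sum])
    using assms(2-) by (auto simp: cnd_def single_def valid_path_def)
  finally show ?thesis unfolding Eqv_def .
qed

lemma mca_props:
  assumes "is_min_cycle_at n \<sigma> v p"
  shows "p \<noteq> [] \<and> hd p = v \<and> last p = v"
  using assms unfolding is_min_cycle_at_def
  by (auto simp: hd_rotate_conv_nth hd_append)

lemma rot_step:
  assumes "k < length c" "c ! k = a" "c ! ((k+1) mod length c) = b"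
  shows "rotate k c @ [a, b] = a # (rotate ((k+1) mod length c) c @ [b])"
proof -
  have ne: "c \<noteq> []" using assms by auto
  have h: "hd (rotate k c) = a" using assms ne by (simp add: hd_rotate_conv_nth)
  have "rotate k c \<noteq> []" using ne by simp
  then have e: "rotate k c = a # tl (rotate k c)" using h by (cases "rotate k c") auto
  have "rotate ((k+1) mod length c) c = rotate (Suc k) c" by (metis rotate_conv_mod Suc_eq_plus1)
  also have "\<dots> = rotate1 (rotate k c)" by simp
  also have "\<dots> = tl (rotate k c) @ [a]" by (subst e) simp
  finally show ?thesis by (subst e) simp
qed

lemma path_key:
  fixes K :: "'k::field itself"
  assumes Cyc: "\<forall>v\<in>edges n \<sigma>. is_min_cycle_at n \<sigma> v (Cyc v)"
    and VE: "\<And>v p1 p2. v \<in> edges n \<sigma> \<Longrightarrow> is_min_cycle_at n \<sigma> v p1 \<Longrightarrow> is_min_cycle_at n \<sigma> v p2 \<Longrightarrow> Eqv K n \<sigma> p1 p2"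
    and AC: "\<And>a b. (a,b) \<in> arrows n \<sigma> \<Longrightarrow> \<exists>c\<in>min_cycles n \<sigma>. \<exists>k<length c. c!k = a \<and> c!((k+1) mod length c) = b"
  shows "valid_path n \<sigma> q \<Longrightarrow> Eqv K n \<sigma> (Cyc (hd q) @ tl q) (q @ tl (Cyc (last q)))"
proof (induction q)
  case Nil then show ?case by (simp add: valid_path_def)
next
  case (Cons a q)
  show ?case
  proof (cases q)
    case Nil
    then have "a \<in> edges n \<sigma>" using Cons.prems by (simp add: valid_path_def)
    then have "Cyc a \<noteq> [] \<and> hd (Cyc a) = a" using mca_props Cyc by blast
    then have "[a] @ tl (Cyc a) = Cyc a" by (cases "Cyc a") auto
    then show ?thesis using Nil by (simp add: Eqv_refl)
  next
    case (Cons b rest)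
    have vq: "valid_path n \<sigma> (b # rest)"
    proof -
      have h: "\<forall>k. Suc k < length (a # b # rest) \<longrightarrow> ((a # b # rest) ! k, (a # b # rest) ! Suc k) \<in> arrows n \<sigma>"
        and s: "set (a # b # rest) \<subseteq> edges n \<sigma>"
        using Cons.prems Cons unfolding valid_path_def by auto
      have "\<forall>k. Suc k < length (b # rest) \<longrightarrow> ((b # rest) ! k, (b # rest) ! Suc k) \<in> arrows n \<sigma>"
      proof (intro allI impI)
        fix k assume "Suc k < length (b # rest)"
        then have "Suc (Suc k) < length (a # b # rest)" by simp
        from h[rule_format, OF this] show "((b # rest) ! k, (b # rest) ! Suc k) \<in> arrows n \<sigma>" by simp
      qed
      then show ?thesis using s unfolding valid_path_def by auto
    qed
    have ab: "(a,b) \<in> arrows n \<sigma>" using Cons.prems Cons unfolding valid_path_def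
      by (metis length_Cons nth_Cons_0 nth_Cons_Suc zero_less_Suc Suc_less_eq)
    have ae: "a \<in> edges n \<sigma>" "b \<in> edges n \<sigma>" using Cons.prems Cons unfolding valid_path_def by auto
    have vab: "valid_path n \<sigma> [a,b]" using ab ae unfolding valid_path_def
      by (auto simp: less_Suc_eq)
    have IH: "Eqv K n \<sigma> (Cyc b @ rest) ((b # rest) @ tl (Cyc (last (b#rest))))"
      using Cons.IH vq Cons by simp
    have cb: "Cyc b \<noteq> [] \<and> hd (Cyc b) = b \<and> last (Cyc b) = b" using mca_props Cyc ae by blast
    have ca: "Cyc a \<noteq> [] \<and> hd (Cyc a) = a \<and> last (Cyc a) = a" using mca_props Cyc ae by blast
    have cl: "Cyc (last (b#rest)) \<noteq> [] \<and> hd (Cyc (last (b#rest))) = last (b#rest)"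
      using mca_props Cyc vq unfolding valid_path_def by (metis last_in_set list.distinct(1) subsetD)
    have tlb: "tl (Cyc b @ rest) = tl (Cyc b) @ rest" using cb by simp
    have E1: "Eqv K n \<sigma> ([a,b] @ tl (Cyc b @ rest)) ([a,b] @ tl ((b # rest) @ tl (Cyc (last (b#rest)))))"
      apply (rule Eqv_lmul[OF IH vab]) using cb by auto
    have E1': "Eqv K n \<sigma> (a # Cyc b @ rest) (a # b # rest @ tl (Cyc (last (b#rest))))"
      using E1 cb by (cases "Cyc b") auto
    obtain c k where c: "c \<in> min_cycles n \<sigma>" "k < length c" "c!k = a" "c!((k+1) mod length c) = b"
      using AC[OF ab] by blast
    define pa where "pa = rotate k c @ [a]"
    define pb where "pb = rotate ((k+1) mod length c) c @ [b]"
    have mpa: "is_min_cycle_at n \<sigma> a pa" unfolding is_min_cycle_at_def pa_def using c by blast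
    have mpb: "is_min_cycle_at n \<sigma> b pb" unfolding is_min_cycle_at_def pb_def using c
      by (metis mod_less_divisor gr_implies_not0 neq0_conv)
    have rs: "pa @ [b] = a # pb" unfolding pa_def pb_def using rot_step[OF c(2-4)] by simp
    have E2: "Eqv K n \<sigma> (Cyc a @ tl [a,b]) (pa @ tl [a,b])"
      apply (rule Eqv_rmul[OF VE[OF ae(1) _ mpa] vab])
      using Cyc ae ca mca_props[OF mpa] by auto
    have E3: "Eqv K n \<sigma> ([a,b] @ tl pb) ([a,b] @ tl (Cyc b))"
      apply (rule Eqv_lmul[OF VE[OF ae(2) mpb] vab])
      using Cyc ae cb mca_props[OF mpb] by auto
    have pbe: "[a,b] @ tl pb = a # pb" using mca_props[OF mpb] by (cases pb) auto
    have cbe: "[a,b] @ tl (Cyc b) = a # Cyc b" using cb by (cases "Cyc b") auto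
    have E4: "Eqv K n \<sigma> (Cyc a @ [b]) (a # Cyc b)"
      using Eqv_trans[OF E2[simplified] E3[unfolded pbe cbe, folded rs]] by simp
    have E5: "Eqv K n \<sigma> ((Cyc a @ [b]) @ tl (b # rest)) ((a # Cyc b) @ tl (b # rest))"
      apply (rule Eqv_rmul[OF E4 vq]) using cb by auto
    have E5': "Eqv K n \<sigma> (Cyc a @ b # rest) (a # Cyc b @ rest)" using E5 by simp
    show ?thesis using Eqv_trans[OF E5' E1'] Cons by simp
  qed
qed

lemma edges_bound: "triangulation n \<sigma> \<Longrightarrow> e \<in> edges n \<sigma> \<Longrightarrow> fst e < snd e \<and> snd e < n"
  unfolding triangulation_def edges_def is_diag_def is_side_def by auto

lemma finite_edges: "triangulation n \<sigma> \<Longrightarrow> finite (edges n \<sigma>)"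
  apply (rule finite_subset[of _ "{..<n} \<times> {..<n}"])
  using edges_bound by fastforce+

lemma main_from:
  fixes K :: "'k::field itself" and x :: "qpath \<Rightarrow> 'k"
  assumes tri: "triangulation n \<sigma>"
    and Cyc: "\<forall>v\<in>edges n \<sigma>. is_min_cycle_at n \<sigma> v (Cyc v)"
    and key: "\<And>q. valid_path n \<sigma> q \<Longrightarrow> Eqv K n \<sigma> (Cyc (hd q) @ tl q) (q @ tl (Cyc (last q)))"
    and xK: "x \<in> KQ n \<sigma>"
  shows "(let C = (\<lambda>r. \<Sum>v\<in>edges n \<sigma>. single (Cyc v) r :: 'k)
            in (\<lambda>r. pmul C x r - pmul x C r)) \<in> jacobian_ideal n \<sigma>"
proof -
  define S where "S = {p. x p \<noteq> 0}"
  define E where "E = edges n \<sigma>"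
  have fS: "finite S" and vS: "\<And>q. q \<in> S \<Longrightarrow> valid_path n \<sigma> q" using xK unfolding KQ_def S_def by auto
  have fE: "finite E" unfolding E_def using finite_edges[OF tri] .
  have xs: "x = (\<lambda>r. \<Sum>q\<in>S. x q * single q r)"
  proof
    fix r
    show "x r = (\<Sum>q\<in>S. x q * single q r)"
    proof (cases "r \<in> S")
      case True
      have "(\<Sum>q\<in>S. x q * single q r) = (\<Sum>q\<in>S. if q = r then x r else 0)"
        by (rule sum.cong) (auto simp: single_def)
      then show ?thesis using True fS by simp
    next
      case False
      have "(\<Sum>q\<in>S. x q * single q r) = 0"
        by (rule sum.neutral) (use False in \<open>auto simp: single_def\<close>)
      then show ?thesis using False S_def by simp
    qed
  qed
  define C where "C = (\<lambda>r. \<Sum>v\<in>E. single (Cyc v) r :: 'k)"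
  have Cs: "C = (\<lambda>r. \<Sum>v\<in>E. 1 * single (Cyc v) r)" unfolding C_def by simp
  have cp: "\<And>v. v \<in> E \<Longrightarrow> Cyc v \<noteq> [] \<and> hd (Cyc v) = v \<and> last (Cyc v) = v"
    using Cyc mca_props unfolding E_def by blast
  have s1: "(\<Sum>v\<in>E. (cnd (Cyc v) q r :: 'k)) = single (Cyc (hd q) @ tl q) r" if "q \<in> S" for q r
  proof -
    have q: "q \<noteq> [] \<and> hd q \<in> E" using vS[OF that] unfolding valid_path_def E_def
      by (cases q) auto
    have "(\<Sum>v\<in>E. (cnd (Cyc v) q r :: 'k)) = (\<Sum>v\<in>E. if v = hd q then single (Cyc (hd q) @ tl q) r else 0)"
      by (rule sum.cong) (use q cp in \<open>auto simp: cnd_def single_def\<close>)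
    then show ?thesis using q fE by simp
  qed
  have s2: "(\<Sum>v\<in>E. (cnd q (Cyc v) r :: 'k)) = single (q @ tl (Cyc (last q))) r" if "q \<in> S" for q r
  proof -
    have q: "q \<noteq> [] \<and> last q \<in> E" using vS[OF that] unfolding valid_path_def E_def
      by auto
    have "(\<Sum>v\<in>E. (cnd q (Cyc v) r :: 'k)) = (\<Sum>v\<in>E. if v = last q then single (q @ tl (Cyc (last q))) r else 0)"
      by (rule sum.cong) (use q cp in \<open>auto simp: cnd_def single_def\<close>)
    then show ?thesis using q fE by simp
  qed
  have eq: "(\<lambda>r. pmul C x r - pmul x C r) = (\<lambda>r. \<Sum>q\<in>S. x q * (single (Cyc (hd q) @ tl q) r - single (q @ tl (Cyc (last q))) r))"
  proof
    fix r
    have "pmul C x r = (\<Sum>v\<in>E. \<Sum>q\<in>S. 1 * x q * cnd (Cyc v) q r)"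
      by (rule pmul_lin[OF fE fS Cs xs])
    also have "\<dots> = (\<Sum>q\<in>S. x q * single (Cyc (hd q) @ tl q) r)"
      by (subst sum.swap) (simp add: s1 sum_distrib_left[symmetric])
    finally have 1: "pmul C x r = (\<Sum>q\<in>S. x q * single (Cyc (hd q) @ tl q) r)" .
    have "pmul x C r = (\<Sum>q\<in>S. \<Sum>v\<in>E. x q * 1 * cnd q (Cyc v) r)"
      by (rule pmul_lin[OF fS fE xs Cs])
    also have "\<dots> = (\<Sum>q\<in>S. x q * single (q @ tl (Cyc (last q))) r)"
      by (simp add: s2 sum_distrib_left[symmetric])
    finally have 2: "pmul x C r = (\<Sum>q\<in>S. x q * single (q @ tl (Cyc (last q))) r)" .
    show "pmul C x r - pmul x C r = (\<Sum>q\<in>S. x q * (single (Cyc (hd q) @ tl q) r - single (q @ tl (Cyc (last q))) r))"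
      unfolding 1 2 by (simp add: right_diff_distrib sum_subtractf)
  qed
  have "(\<lambda>r. \<Sum>q\<in>S. x q * (single (Cyc (hd q) @ tl q) r - single (q @ tl (Cyc (last q))) r)) \<in> jacobian_ideal n \<sigma>"
    unfolding jacobian_ideal_def
    by (rule gi_sum[OF fS, where f="\<lambda>q r. single (Cyc (hd q) @ tl q) r - single (q @ tl (Cyc (last q))) r", simplified])
       (use key vS in \<open>auto simp: Eqv_def jacobian_ideal_def\<close>)
  then show ?thesis unfolding Let_def using eq unfolding C_def E_def by simp
qed


definition kf :: "nat \<Rightarrow> nat \<Rightarrow> nat \<Rightarrow> nat" where
  "kf n e w = (w + n - e) mod n"

definition btw :: "nat \<Rightarrow> nat \<Rightarrow> nat \<Rightarrow> bool" where
  "btw a b c \<longleftrightarrow> min a b < c \<and> c < max a b"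

lemma kf_eq: "e < n \<Longrightarrow> w < n \<Longrightarrow> kf n e w = (if e \<le> w then w - e else w + n - e)"
proof (cases "e \<le> w")
  case True
  assume "w < n"
  have 1: "w + n - e = (w - e) + n" using True by auto
  have "w - e < n" using \<open>w<n\<close> by auto
  then show ?thesis using True unfolding kf_def by (metis 1 mod_add_self2 mod_less)
qed (simp add: kf_def)

lemma kf_inj: "e < n \<Longrightarrow> a < n \<Longrightarrow> b < n \<Longrightarrow> kf n e a = kf n e b \<Longrightarrow> a = b"
  by (auto simp: kf_eq split: if_splits)

lemma kf_self: "e < n \<Longrightarrow> kf n e e = 0" by (simp add: kf_eq)

lemma kf_lt: "e < n \<Longrightarrow> w < n \<Longrightarrow> kf n e w < n" by (auto simp: kf_eq)

lemma cross_char: "a \<noteq> b \<Longrightarrow> c \<noteq> d \<Longrightarrow>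
   crosses (edg a b) (edg c d) \<longleftrightarrow> (a \<noteq> c \<and> a \<noteq> d \<and> b \<noteq> c \<and> b \<noteq> d \<and> btw a b c \<noteq> btw a b d)"
  unfolding crosses_def edg_def btw_def by (auto simp: min_def max_def)

lemma rot_btw: "a < n \<Longrightarrow> b < n \<Longrightarrow> c < n \<Longrightarrow> e < n \<Longrightarrow> a \<noteq> b \<Longrightarrow> c \<noteq> a \<Longrightarrow> c \<noteq> b \<Longrightarrow>
   btw (kf n e a) (kf n e b) (kf n e c) = (btw a b c \<noteq> (min a b < e \<and> e \<le> max a b))"
proof -
  have *: "btw (kf n e a) (kf n e b) (kf n e c) = (btw a b c \<noteq> (a < e \<and> e \<le> b))"
    if "a < n" "b < n" "c < n" "e < n" "a < b" "c \<noteq> a" "c \<noteq> b" for a b c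
    using that unfolding btw_def
    by (cases "e \<le> a"; cases "e \<le> b"; cases "e \<le> c"; simp add: kf_eq min_def max_def; arith)
  assume "a < n" "b < n" "c < n" "e < n" "a \<noteq> b" "c \<noteq> a" "c \<noteq> b"
  then show ?thesis
  proof (cases "a < b")
    case True then show ?thesis using *[of a b c] \<open>a<n\<close> \<open>b<n\<close> \<open>c<n\<close> \<open>e<n\<close> \<open>c\<noteq>a\<close> \<open>c\<noteq>b\<close> by (simp add: min_def max_def)
  next
    case False
    have sym: "\<And>x y z. btw x y z = btw y x z" by (auto simp: btw_def)
    from False \<open>a\<noteq>b\<close> have "b < a" by simp
    then show ?thesis using *[of b a c] \<open>a<n\<close> \<open>b<n\<close> \<open>c<n\<close> \<open>e<n\<close> \<open>c\<noteq>a\<close> \<open>c\<noteq>b\<close>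
      by (simp add: min_def max_def sym[of "kf n e a"] sym[of a])
  qed
qed

lemma cross_rot: "a < n \<Longrightarrow> b < n \<Longrightarrow> c < n \<Longrightarrow> d < n \<Longrightarrow> e < n \<Longrightarrow> a \<noteq> b \<Longrightarrow> c \<noteq> d \<Longrightarrow>
   a \<noteq> c \<Longrightarrow> a \<noteq> d \<Longrightarrow> b \<noteq> c \<Longrightarrow> b \<noteq> d \<Longrightarrow>
   crosses (edg a b) (edg c d) \<longleftrightarrow> btw (kf n e a) (kf n e b) (kf n e c) \<noteq> btw (kf n e a) (kf n e b) (kf n e d)"
  using rot_btw[of a n b c e] rot_btw[of a n b d e] by (simp add: cross_char) blast

lemma side_kf: "n \<ge> 3 \<Longrightarrow> e < n \<Longrightarrow> w < n \<Longrightarrow> e \<noteq> w \<Longrightarrow>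
   is_side n (edg e w) \<longleftrightarrow> (kf n e w = 1 \<or> kf n e w = n - 1)"
  by (cases "e < w") (simp_all add: is_side_def edg_def kf_eq min_def max_def; arith)+

lemma kf_nxt: "n \<ge> 3 \<Longrightarrow> i < n \<Longrightarrow> nxt n i < n \<and> kf n i (nxt n i) = 1"
  unfolding nxt_def kf_def by (cases "i + 1 = n") (auto simp: mod_Suc)

lemma kf_prv: "n \<ge> 3 \<Longrightarrow> i < n \<Longrightarrow> prv n i < n \<and> kf n i (prv n i) = n - 1"
proof -
  assume n: "n \<ge> 3" "i < n"
  have p: "prv n i = (if i = 0 then n - 1 else i - 1)"
  proof (cases "i = 0")
    case False
    then have "i + n - 1 = (i - 1) + n" by simp
    then show ?thesis using False n unfolding prv_def by (metis mod_add_self2 mod_less less_imp_diff_less)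
  qed (use n in \<open>simp add: prv_def\<close>)
  show ?thesis using n by (simp add: p kf_eq)
qed

lemma no_cross_side: "is_side n e \<Longrightarrow> snd d < n \<Longrightarrow> \<not> crosses e d \<and> \<not> crosses d e"
  unfolding is_side_def crosses_def by auto

lemma no_cross: "triangulation n \<sigma> \<Longrightarrow> d \<in> edges n \<sigma> \<Longrightarrow> e \<in> edges n \<sigma> \<Longrightarrow> \<not> crosses d e"
  using no_cross_side[of n e d] no_cross_side[of n d e] edges_bound[of n \<sigma>]
  unfolding edges_def triangulation_def by blast


definition nb :: "nat \<Rightarrow> edge set \<Rightarrow> nat \<Rightarrow> nat set" where
  "nb n \<sigma> e = {w. w < n \<and> edg e w \<in> edges n \<sigma>}"

lemma fan_alt: "fan n \<sigma> e = sort_key (kf n e) (sorted_list_of_set (nb n \<sigma> e))"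
  by (simp add: fan_def kf_def[abs_def] nb_def)

lemma nb_fin: "finite (nb n \<sigma> e)"
  unfolding nb_def by simp

lemma fan_set: "set (fan n \<sigma> e) = nb n \<sigma> e"
  by (simp add: fan_alt nb_fin)

lemma fan_dist: "distinct (fan n \<sigma> e)"
  by (simp add: fan_alt nb_fin)

lemma fan_sorted: "sorted (map (kf n e) (fan n \<sigma> e))"
  by (simp add: fan_alt)

lemma edg_sym: "edg a b = edg b a"
  by (simp add: edg_def min.commute max.commute)

lemma edg_inj: "edg e a = edg e b \<Longrightarrow> a = b"
  unfolding edg_def by (auto simp: min_def max_def split: if_splits)

lemma edg_fst_snd: "fst v < snd v \<Longrightarrow> v = edg (fst v) (snd v)"
  unfolding edg_def by (cases v) auto

lemma nb_props: "triangulation n \<sigma> \<Longrightarrow> w \<in> nb n \<sigma> e \<Longrightarrow> w \<noteq> e \<and> w < n \<and> e < n \<and> edg e w \<in> edges n \<sigma>"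
  unfolding nb_def using edges_bound[of n \<sigma> "edg e w"] by (auto simp: edg_def min_def max_def split: if_splits)

lemma fan_strict:
  assumes "e < n" "i < j" "j < length (fan n \<sigma> e)"
  shows "kf n e (fan n \<sigma> e ! i) < kf n e (fan n \<sigma> e ! j)"
proof -
  let ?f = "fan n \<sigma> e"
  have "kf n e (?f ! i) \<le> kf n e (?f ! j)"
    using fan_sorted[of n e \<sigma>] assms by (auto simp: sorted_iff_nth_mono)
  moreover have "?f ! i \<noteq> ?f ! j" using fan_dist assms by (simp add: nth_eq_iff_index_eq)
  moreover have "?f ! i < n" "?f ! j < n" using fan_set[of n \<sigma> e] assms nth_mem[of i ?f] nth_mem[of j ?f]
    by (auto simp: nb_def)
  ultimately show ?thesis using kf_inj[OF assms(1)] by (meson le_neq_implies_less)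
qed

lemma fan_consec:
  assumes "e < n" "u \<in> nb n \<sigma> e" "w \<in> nb n \<sigma> e" "kf n e u < kf n e w"
    "\<forall>y\<in>nb n \<sigma> e. \<not> (kf n e u < kf n e y \<and> kf n e y < kf n e w)"
  shows "\<exists>k. Suc k < length (fan n \<sigma> e) \<and> fan n \<sigma> e ! k = u \<and> fan n \<sigma> e ! Suc k = w"
proof -
  let ?f = "fan n \<sigma> e"
  obtain a where a: "a < length ?f" "?f ! a = u" using assms(2) fan_set by (metis in_set_conv_nth)
  obtain b where b: "b < length ?f" "?f ! b = w" using assms(3) fan_set by (metis in_set_conv_nth)
  have "a < b"
  proof (rule ccontr)
    assume "\<not> a < b"
    then have "b < a \<or> b = a" by auto
    then show False
    proof
      assume "b < a" then show False using fan_strict[OF assms(1) _ a(1)] a b assms(4) by fastforce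
    next
      assume "b = a" then show False using a b assms(4) by simp
    qed
  qed
  moreover have "\<not> Suc a < b"
  proof
    assume h: "Suc a < b"
    have "?f ! Suc a \<in> nb n \<sigma> e" using fan_set h b(1) by (metis nth_mem less_trans)
    moreover have "kf n e u < kf n e (?f ! Suc a)" using fan_strict[OF assms(1), where \<sigma>=\<sigma>, of a "Suc a"] a h b by simp
    moreover have "kf n e (?f ! Suc a) < kf n e w" using fan_strict[OF assms(1), where \<sigma>=\<sigma>, of "Suc a" b] a h b by simp
    ultimately show False using assms(5) by blast
  qed
  ultimately have "b = Suc a" by simp
  then show ?thesis using a b by blast
qed

lemma fan_consec2:
  assumes "e < n" "Suc k < length (fan n \<sigma> e)" "y \<in> nb n \<sigma> e"
  shows "\<not> (kf n e (fan n \<sigma> e ! k) < kf n e y \<and> kf n e y < kf n e (fan n \<sigma> e ! Suc k))"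
proof
  let ?f = "fan n \<sigma> e"
  assume h: "kf n e (?f ! k) < kf n e y \<and> kf n e y < kf n e (?f ! Suc k)"
  obtain c where c: "c < length ?f" "?f ! c = y" using assms(3) fan_set by (metis in_set_conv_nth)
  have "c \<le> k \<or> Suc k \<le> c" by auto
  then show False
  proof
    assume "c \<le> k"
    then have "kf n e y \<le> kf n e (?f ! k)" using fan_strict[OF assms(1), where \<sigma>=\<sigma>, of c k] c assms(2)
      by (cases "c = k") auto
    then show False using h by simp
  next
    assume "Suc k \<le> c"
    then have "kf n e (?f ! Suc k) \<le> kf n e y" using fan_strict[OF assms(1), where \<sigma>=\<sigma>, of "Suc k" c] c
      by (cases "c = Suc k") auto
    then show False using h by simp
  qed
qed

lemma nxt_prv_nb:
  assumes "n \<ge> 3" "e < n"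
  shows "nxt n e \<in> nb n \<sigma> e" "prv n e \<in> nb n \<sigma> e"
proof -
  have a: "nxt n e < n" "kf n e (nxt n e) = 1" using kf_nxt assms by auto
  have b: "prv n e < n" "kf n e (prv n e) = n - 1" using kf_prv assms by auto
  have "nxt n e \<noteq> e" using a kf_self[OF assms(2)] by auto
  then have "is_side n (edg e (nxt n e))" using side_kf[OF assms(1,2) a(1)] a by simp
  then show "nxt n e \<in> nb n \<sigma> e" using a unfolding nb_def edges_def by simp
  have "prv n e \<noteq> e" using b kf_self[OF assms(2)] assms by auto
  then have "is_side n (edg e (prv n e))" using side_kf[OF assms(1,2) b(1)] b by simp
  then show "prv n e \<in> nb n \<sigma> e" using b unfolding nb_def edges_def by simp
qed

lemma kf_nb_pos: "triangulation n \<sigma> \<Longrightarrow> w \<in> nb n \<sigma> e \<Longrightarrow> kf n e w \<ge> 1"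
proof -
  assume t: "triangulation n \<sigma>" and w: "w \<in> nb n \<sigma> e"
  from nb_props[OF t w] have "w \<noteq> e" "w < n" "e < n" by auto
  then show ?thesis using kf_inj[of e n w e] kf_self[of e n] by (cases "kf n e w") auto
qed

lemma fan_first_last:
  assumes t: "triangulation n \<sigma>" and n: "n \<ge> 3" "e < n"
  shows "fan n \<sigma> e \<noteq> []" "fan n \<sigma> e ! 0 = nxt n e" "fan n \<sigma> e ! (length (fan n \<sigma> e) - 1) = prv n e"
proof -
  let ?f = "fan n \<sigma> e"
  show ne: "?f \<noteq> []" using nxt_prv_nb[OF n] fan_set by (metis empty_iff list.set(1))
  obtain j where j: "j < length ?f" "?f ! j = nxt n e" using nxt_prv_nb[OF n] fan_set by (metis in_set_conv_nth)
  have "j = 0"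
  proof (rule ccontr)
    assume "j \<noteq> 0"
    then have "kf n e (?f ! 0) < 1" using fan_strict[OF n(2), where \<sigma>=\<sigma>, of 0 j] j kf_nxt[OF n] by simp
    moreover have "?f ! 0 \<in> nb n \<sigma> e" using ne fan_set by (metis nth_mem length_greater_0_conv)
    ultimately show False using kf_nb_pos[OF t] by fastforce
  qed
  then show "?f ! 0 = nxt n e" using j by simp
  obtain j where j: "j < length ?f" "?f ! j = prv n e" using nxt_prv_nb[OF n] fan_set by (metis in_set_conv_nth)
  have "j = length ?f - 1"
  proof (rule ccontr)
    assume "j \<noteq> length ?f - 1"
    then have "n - 1 < kf n e (?f ! (length ?f - 1))" using fan_strict[OF n(2), where \<sigma>=\<sigma>, of j "length ?f - 1"] j kf_prv[OF n] by simp
    moreover have "?f ! (length ?f - 1) \<in> nb n \<sigma> e" using ne fan_set by (metis nth_mem diff_less length_greater_0_conv zero_less_one)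
    ultimately show False using kf_lt[OF n(2)] nb_props[OF t] by fastforce
  qed
  then show "?f ! (length ?f - 1) = prv n e" using j by simp
qed


lemma tri_mem: "(p,q,r) \<in> triangles n \<sigma> \<longleftrightarrow> p < q \<and> q < r \<and> r < n \<and> (p,q) \<in> edges n \<sigma> \<and> (q,r) \<in> edges n \<sigma> \<and> (p,r) \<in> edges n \<sigma>"
  unfolding triangles_def by simp

lemma tri_set: "set (tri_cycle (p,q,r)) = {(q,r),(p,q),(p,r)}"
  by (simp add: tri_cycle_def)

lemma tri_len: "length (tri_cycle T) = 3"
  by (cases T) (simp add: tri_cycle_def)

lemma tri_sub: "T \<in> triangles n \<sigma> \<Longrightarrow> set (tri_cycle T) \<subseteq> edges n \<sigma>"
  by (cases T) (auto simp: tri_mem tri_set)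

lemma tri_dist: "T \<in> triangles n \<sigma> \<Longrightarrow> distinct (tri_cycle T)"
  by (cases T) (auto simp: tri_mem tri_cycle_def)

lemma tri_no_between:
  assumes t: "triangulation n \<sigma>" and d: "u \<noteq> w" "e \<noteq> u" "e \<noteq> w" and lt: "u < n" "w < n" "e < n"
    and uw: "edg u w \<in> edges n \<sigma>" and k: "kf n e u < kf n e w" and y: "y \<in> nb n \<sigma> e"
  shows "\<not> (kf n e u < kf n e y \<and> kf n e y < kf n e w)"
proof
  assume h: "kf n e u < kf n e y \<and> kf n e y < kf n e w"
  have y2: "y \<noteq> e" "y < n" "edg e y \<in> edges n \<sigma>" using nb_props[OF t y] by auto
  have yu: "y \<noteq> u" "y \<noteq> w" using h by auto
  have "crosses (edg u w) (edg e y)"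
    apply (subst cross_rot[where e=e])
    using d lt y2 yu h k kf_self[OF lt(3)] by (auto simp: btw_def)
  then show False using no_cross[OF t uw y2(3)] by simp
qed

lemma fan_tri_aux:
  assumes t: "triangulation n \<sigma>" and e: "e < n" and u: "u \<in> nb n \<sigma> e" and w: "w \<in> nb n \<sigma> e"
    and k: "kf n e u < kf n e w"
    and nob: "\<forall>y\<in>nb n \<sigma> e. \<not> (kf n e u < kf n e y \<and> kf n e y < kf n e w)"
    and yz: "y < n" "z < n" "y \<noteq> z" "y \<noteq> u" "y \<noteq> w" "z \<noteq> u" "z \<noteq> w"
    and yb: "kf n e u < kf n e y \<and> kf n e y < kf n e w"
    and zb: "\<not> (kf n e u < kf n e z \<and> kf n e z < kf n e w)"
    and d: "edg y z \<in> edges n \<sigma>"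
  shows False
proof -
  have u2: "u \<noteq> e" "u < n" "edg e u \<in> edges n \<sigma>" using nb_props[OF t u] by auto
  have w2: "w \<noteq> e" "w < n" "edg e w \<in> edges n \<sigma>" using nb_props[OF t w] by auto
  have ke: "kf n e e = 0" using kf_self[OF e] .
  show False
  proof (cases "z = e")
    case True
    then have "y \<in> nb n \<sigma> e" using d yz unfolding nb_def by (simp add: edg_sym)
    then show False using nob yb by blast
  next
    case False
    have ye: "y \<noteq> e" using yb ke by auto
    have kzne: "kf n e z \<noteq> kf n e u" "kf n e z \<noteq> kf n e w"
      using kf_inj[OF e] yz u2 w2 by metis+
    have kz0: "kf n e z \<noteq> 0" using kf_inj[OF e] yz False ke e by metis
    have "kf n e z < kf n e u \<or> kf n e w < kf n e z" using zb kzne by auto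
    then show False
    proof
      assume a: "kf n e z < kf n e u"
      have "crosses (edg e u) (edg y z)"
        apply (subst cross_rot[where e=e])
        using yz u2 ye False e a yb ke kz0 by (auto simp: btw_def)
      then show False using no_cross[OF t u2(3) d] by simp
    next
      assume a: "kf n e w < kf n e z"
      have "crosses (edg e w) (edg y z)"
        apply (subst cross_rot[where e=e])
        using yz w2 ye False e a yb ke kz0 by (auto simp: btw_def)
      then show False using no_cross[OF t w2(3) d] by simp
    qed
  qed
qed

lemma fan_tri:
  assumes t: "triangulation n \<sigma>" and e: "e < n" and u: "u \<in> nb n \<sigma> e" and w: "w \<in> nb n \<sigma> e"
    and k: "kf n e u < kf n e w"
    and nob: "\<forall>y\<in>nb n \<sigma> e. \<not> (kf n e u < kf n e y \<and> kf n e y < kf n e w)"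
  shows "edg u w \<in> edges n \<sigma>"
proof (rule ccontr)
  assume nin: "edg u w \<notin> edges n \<sigma>"
  have u2: "u \<noteq> e" "u < n" using nb_props[OF t u] by auto
  have w2: "w \<noteq> e" "w < n" using nb_props[OF t w] by auto
  have uw: "u \<noteq> w" using k by auto
  have "is_diag n (edg u w)"
    using nin uw u2 w2 unfolding is_diag_def edges_def edg_def by (auto simp: min_def max_def)
  moreover have "edg u w \<notin> \<sigma>" using nin unfolding edges_def by auto
  ultimately obtain d where d: "d \<in> \<sigma>" "crosses (edg u w) d" using t unfolding triangulation_def by blast
  have dd: "is_diag n d" using d t unfolding triangulation_def by auto
  define a where "a = fst d"
  define b where "b = snd d"
  have ab: "a < b" "b < n" "d = edg a b" using dd unfolding a_def b_def is_diag_def edg_def by (cases d; auto)+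
  have de: "edg a b \<in> edges n \<sigma>" using d ab unfolding edges_def by auto
  have cr: "crosses (edg u w) (edg a b)" using d ab by simp
  have dist: "u \<noteq> a" "u \<noteq> b" "w \<noteq> a" "w \<noteq> b" using cr cross_char[OF uw, of a b] ab by auto
  have x: "btw (kf n e u) (kf n e w) (kf n e a) \<noteq> btw (kf n e u) (kf n e w) (kf n e b)"
    using cr cross_rot[OF u2(2) w2(2) _ ab(2) e uw _ dist] ab by auto
  have mm: "min (kf n e u) (kf n e w) = kf n e u" "max (kf n e u) (kf n e w) = kf n e w" using k by auto
  show False
  proof (cases "btw (kf n e u) (kf n e w) (kf n e a)")
    case True
    then show False using fan_tri_aux[OF t e u w k nob, of a b] x ab dist de mm by (auto simp: btw_def)
  next
    case False
    then show False using fan_tri_aux[OF t e u w k nob, of b a] x ab dist de mm by (auto simp: btw_def edg_sym)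
  qed
qed

lemma tri_pivot:
  assumes T: "(p,q,r) \<in> triangles n \<sigma>" and e: "e \<in> {p,q,r}"
  shows "\<exists>u w k. k < 3 \<and> tri_cycle (p,q,r) ! k = edg e u \<and> tri_cycle (p,q,r) ! ((k+1) mod 3) = edg e w
    \<and> kf n e u < kf n e w \<and> {e,u,w} = {p,q,r} \<and> e \<noteq> u \<and> e \<noteq> w \<and> u \<noteq> w"
proof -
  have o: "p < q" "q < r" "r < n" using T tri_mem by auto
  consider "e = p" | "e = q" | "e = r" using e by auto
  then show ?thesis
  proof cases
    case 1
    show ?thesis
      apply (rule exI[of _ q], rule exI[of _ r], rule exI[of _ 1])
      using o 1 by (auto simp: tri_cycle_def edg_def kf_eq)
  next
    case 2
    show ?thesis
      apply (rule exI[of _ r], rule exI[of _ p], rule exI[of _ 0])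
      using o 2 by (auto simp: tri_cycle_def edg_def kf_eq)
  next
    case 3
    show ?thesis
      apply (rule exI[of _ p], rule exI[of _ q], rule exI[of _ 2])
      using o 3 by (auto simp: tri_cycle_def edg_def kf_eq)
  qed
qed


definition CE :: "'k::field itself \<Rightarrow> nat \<Rightarrow> edge set \<Rightarrow> edge \<Rightarrow> edge list \<Rightarrow> edge list \<Rightarrow> bool" where
  "CE K n \<sigma> v c1 c2 \<longleftrightarrow> (\<forall>k1 k2. k1 < length c1 \<longrightarrow> c1!k1 = v \<longrightarrow> k2 < length c2 \<longrightarrow> c2!k2 = v \<longrightarrow>
      Eqv K n \<sigma> (rotate k1 c1 @ [v]) (rotate k2 c2 @ [v]))"

lemma CE_intro:
  assumes "distinct c1" "distinct c2" "k1 < length c1" "c1!k1 = v" "k2 < length c2" "c2!k2 = v"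
    "Eqv K n \<sigma> (rotate k1 c1 @ [v]) (rotate k2 c2 @ [v])"
  shows "CE K n \<sigma> v c1 c2"
  unfolding CE_def
proof (intro allI impI)
  fix j1 j2 assume "j1 < length c1" "c1!j1 = v" "j2 < length c2" "c2!j2 = v"
  then have "j1 = k1" "j2 = k2" using assms by (metis nth_eq_iff_index_eq)+
  then show "Eqv K n \<sigma> (rotate j1 c1 @ [v]) (rotate j2 c2 @ [v])" using assms by simp
qed

lemma CE_refl: "distinct c \<Longrightarrow> CE K n \<sigma> v c c"
  unfolding CE_def by (metis Eqv_refl nth_eq_iff_index_eq)

lemma CE_sym: "CE K n \<sigma> v c1 c2 \<Longrightarrow> CE K n \<sigma> v c2 c1"
  unfolding CE_def by (blast intro: Eqv_sym)

lemma CE_trans: "CE K n \<sigma> v c1 c2 \<Longrightarrow> CE K n \<sigma> v c2 c3 \<Longrightarrow> v \<in> set c2 \<Longrightarrow> CE K n \<sigma> v c1 c3"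
  unfolding CE_def by (metis Eqv_trans in_set_conv_nth)

lemma cd_one:
  assumes "distinct c" "k < length c" "c!k = x" "c!((k+1) mod length c) = y"
  shows "cycderiv (x,y) c r = (single (rotate (Suc k) c) r :: 'k::field)"
proof -
  have "cycderiv (x,y) c r = (\<Sum>j<length c. if j = k then (if rotate (Suc k) c = r then 1 else 0) else (0::'k))"
    unfolding cycderiv_def
  proof (rule sum.cong[OF refl])
    fix j assume j: "j \<in> {..<length c}"
    show "(if (c ! j, c ! ((j + 1) mod length c)) = (x, y) \<and> rotate (Suc j) c = r then 1 else 0) =
         (if j = k then if rotate (Suc k) c = r then 1 else 0 else (0::'k))"
    proof (cases "j = k")
      case True then show ?thesis using assms by simp
    next
      case False
      then have "c ! j \<noteq> x" using assms j nth_eq_iff_index_eq by fastforce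
      then show ?thesis using False by simp
    qed
  qed
  also have "\<dots> = (if rotate (Suc k) c = r then 1 else 0)" using assms(2) by (subst sum.delta[OF finite_lessThan]) (simp del: rotate_Suc)
  finally show ?thesis unfolding single_def by (metis (full_types))
qed

lemma cd_zero:
  assumes "(x,y) \<notin> cyc_arrows c"
  shows "cycderiv (x,y) c r = (0 :: 'k::field)"
  unfolding cycderiv_def
  apply (rule sum.neutral)
  using assms unfolding cyc_arrows_def by auto

lemma tri_uniq:
  assumes "T1 \<in> triangles n \<sigma>" "T2 \<in> triangles n \<sigma>" "x \<noteq> y"
    "x \<in> set (tri_cycle T1)" "y \<in> set (tri_cycle T1)" "x \<in> set (tri_cycle T2)" "y \<in> set (tri_cycle T2)"
  shows "T1 = T2"
  using assms by (cases T1; cases T2) (auto simp: tri_mem tri_set)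

lemma big_set: "set (big_cycle n \<sigma> e) = edg e ` nb n \<sigma> e"
  by (simp add: big_cycle_def fan_set)

lemma big_dist: "distinct (big_cycle n \<sigma> e)"
  unfolding big_cycle_def using fan_dist
  by (auto simp: distinct_map inj_on_def intro: edg_inj)

lemma edg_other: "edg e1 a = edg e2 b \<Longrightarrow> e1 \<noteq> e2 \<Longrightarrow> a = e2"
  unfolding edg_def by (auto simp: min_def max_def split: if_splits)

lemma big_uniq:
  assumes "x \<noteq> y" "x \<in> set (big_cycle n \<sigma> e1)" "y \<in> set (big_cycle n \<sigma> e1)"
    "x \<in> set (big_cycle n \<sigma> e2)" "y \<in> set (big_cycle n \<sigma> e2)"
  shows "e1 = e2"
proof (rule ccontr)
  assume ne: "e1 \<noteq> e2"
  obtain a b a' b' where "x = edg e1 a" "y = edg e1 b" "x = edg e2 a'" "y = edg e2 b'"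
    using assms(2-5) big_set by (metis imageE)
  then have "a = e2" "b = e2" using edg_other ne by metis+
  then show False using assms(1) \<open>x = edg e1 a\<close> \<open>y = edg e1 b\<close> by simp
qed

lemma fin_tri: "finite (triangles n \<sigma>)"
  apply (rule finite_subset[of _ "{..<n} \<times> {..<n} \<times> {..<n}"])
  by (auto simp: triangles_def)

lemma fin_ext: "finite (ext_vertices n \<sigma>)"
  by (rule finite_subset[of _ "{..<n}"]) (auto simp: ext_vertices_def)

lemma rot_facts:
  assumes "k < length c"
  shows "rotate (Suc k) c \<noteq> [] \<and> last (rotate (Suc k) c) = c!k \<and> hd (rotate (Suc k) c) = c ! (Suc k mod length c)
     \<and> rotate k c = c!k # tl (rotate k c) \<and> rotate (Suc k) c = tl (rotate k c) @ [c!k]"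
proof -
  have ne: "c \<noteq> []" using assms by auto
  have h: "hd (rotate k c) = c!k" using assms ne by (simp add: hd_rotate_conv_nth)
  have "rotate k c \<noteq> []" using ne by simp
  then have e: "rotate k c = c!k # tl (rotate k c)" using h by (cases "rotate k c") auto
  have e2: "rotate (Suc k) c = tl (rotate k c) @ [c!k]" by (simp, subst e, simp)
  have h2: "hd (rotate (Suc k) c) = c ! (Suc k mod length c)" using ne by (rule hd_rotate_conv_nth)
  have l: "last (rotate (Suc k) c) = c!k" by (subst e2) simp
  show ?thesis using e e2 ne h2 l by simp
qed



lemma cyc_arrows_set: "(x,y) \<in> cyc_arrows c \<Longrightarrow> x \<in> set c \<and> y \<in> set c"
proof -
  assume "(x,y) \<in> cyc_arrows c"
  then obtain k where k: "k < length c" "x = c!k" "y = c!((k+1) mod length c)" unfolding cyc_arrows_def by blast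
  have "(k+1) mod length c < length c" using k(1) by (auto intro: mod_less_divisor)
  then show ?thesis using k by simp
qed

lemma dW_eq:
  assumes T: "T \<in> triangles n \<sigma>" and k: "k < 3" "tri_cycle T ! k = x" "tri_cycle T ! ((k+1) mod 3) = y"
    and e: "e \<in> ext_vertices n \<sigma>" and m: "Suc m < length (big_cycle n \<sigma> e)"
    "big_cycle n \<sigma> e ! m = x" "big_cycle n \<sigma> e ! Suc m = y"
  shows "(dW n \<sigma> (x,y) :: qpath \<Rightarrow> 'k::field) = (\<lambda>r. single (rotate (Suc k) (tri_cycle T)) r - single (rotate (Suc m) (big_cycle n \<sigma> e)) r)"
proof
  fix r
  have k3: "(k+1) mod 3 \<noteq> k" "(k+1) mod 3 < 3" using k(1) by presburger+
  have "tri_cycle T ! k \<noteq> tri_cycle T ! ((k+1) mod 3)"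
    using nth_eq_iff_index_eq[OF tri_dist[OF T], of k "(k+1) mod 3"] k(1) k3 tri_len[of T] by simp
  then have xy: "x \<noteq> y" using k by simp
  have xyT: "x \<in> set (tri_cycle T)" "y \<in> set (tri_cycle T)" using k k3 tri_len[of T] nth_mem[of k "tri_cycle T"] nth_mem[of "(k+1) mod 3" "tri_cycle T"] by auto
  have xyB: "x \<in> set (big_cycle n \<sigma> e)" "y \<in> set (big_cycle n \<sigma> e)" using m nth_mem[of m "big_cycle n \<sigma> e"] nth_mem[of "Suc m" "big_cycle n \<sigma> e"] by auto
  have s1: "(\<Sum>t\<in>triangles n \<sigma>. cycderiv (x,y) (tri_cycle t) r) = (single (rotate (Suc k) (tri_cycle T)) r :: 'k)"
  proof -
    have "(\<Sum>t\<in>triangles n \<sigma>. cycderiv (x,y) (tri_cycle t) r) = (\<Sum>t\<in>triangles n \<sigma>. if t = T then single (rotate (Suc k) (tri_cycle T)) r else (0::'k))"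
    proof (rule sum.cong[OF refl])
      fix t assume t: "t \<in> triangles n \<sigma>"
      show "cycderiv (x,y) (tri_cycle t) r = (if t = T then single (rotate (Suc k) (tri_cycle T)) r else (0::'k))"
      proof (cases "t = T")
        case True then show ?thesis using cd_one[OF tri_dist[OF T], of k x y] k tri_len[of T] by simp
      next
        case False
        have "(x,y) \<notin> cyc_arrows (tri_cycle t)"
        proof
          assume "(x,y) \<in> cyc_arrows (tri_cycle t)"
          then have "x \<in> set (tri_cycle t)" "y \<in> set (tri_cycle t)" using cyc_arrows_set by auto
          then show False using tri_uniq[OF t T xy] xyT False by blast
        qed
        then show ?thesis using False cd_zero by simp
      qed
    qed
    then show ?thesis using T fin_tri by simp
  qed
  have s2: "(\<Sum>i\<in>ext_vertices n \<sigma>. cycderiv (x,y) (big_cycle n \<sigma> i) r) = (single (rotate (Suc m) (big_cycle n \<sigma> e)) r :: 'k)"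
  proof -
    have "(\<Sum>i\<in>ext_vertices n \<sigma>. cycderiv (x,y) (big_cycle n \<sigma> i) r) = (\<Sum>i\<in>ext_vertices n \<sigma>. if i = e then single (rotate (Suc m) (big_cycle n \<sigma> e)) r else (0::'k))"
    proof (rule sum.cong[OF refl])
      fix i assume i: "i \<in> ext_vertices n \<sigma>"
      show "cycderiv (x,y) (big_cycle n \<sigma> i) r = (if i = e then single (rotate (Suc m) (big_cycle n \<sigma> e)) r else (0::'k))"
      proof (cases "i = e")
        case True then show ?thesis using cd_one[OF big_dist[of n \<sigma> e], of m x y] m by simp
      next
        case False
        have "(x,y) \<notin> cyc_arrows (big_cycle n \<sigma> i)"
        proof
          assume "(x,y) \<in> cyc_arrows (big_cycle n \<sigma> i)"
          then have "x \<in> set (big_cycle n \<sigma> i)" "y \<in> set (big_cycle n \<sigma> i)" using cyc_arrows_set by auto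
          then show False using big_uniq[OF xy] xyB False by blast
        qed
        then show ?thesis using False cd_zero by simp
      qed
    qed
    then show ?thesis using e fin_ext by simp
  qed
  show "(dW n \<sigma> (x,y) r :: 'k) = single (rotate (Suc k) (tri_cycle T)) r - single (rotate (Suc m) (big_cycle n \<sigma> e)) r"
    unfolding dW_def using s1 s2 by simp
qed


lemma lm_path: "k < length c \<Longrightarrow> c!k = x \<Longrightarrow> hd (rotate (Suc k) c) = y \<Longrightarrow> [x,y] @ tl (rotate (Suc k) c) = rotate k c @ [x]"
proof -
  assume a: "k < length c" "c!k = x" "hd (rotate (Suc k) c) = y"
  note rf = rot_facts[OF a(1)]
  have "[x,y] @ tl (rotate (Suc k) c) = x # rotate (Suc k) c" using rf a by (cases "rotate (Suc k) c") auto
  also have "\<dots> = rotate k c @ [x]" using rf a by (metis append_Cons)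
  finally show ?thesis .
qed

lemma rel_CE:
  fixes K :: "'k::field itself"
  assumes t: "triangulation n \<sigma>" and T: "T \<in> triangles n \<sigma>" and k: "k < 3" "tri_cycle T ! k = x" "tri_cycle T ! ((k+1) mod 3) = y"
    and e: "e \<in> ext_vertices n \<sigma>" and m: "Suc m < length (big_cycle n \<sigma> e)"
    "big_cycle n \<sigma> e ! m = x" "big_cycle n \<sigma> e ! Suc m = y"
    and nsd: "x \<notin> sides n \<or> y \<notin> sides n"
  shows "CE K n \<sigma> x (tri_cycle T) (big_cycle n \<sigma> e) \<and> CE K n \<sigma> y (tri_cycle T) (big_cycle n \<sigma> e)"
proof -
  let ?ct = "tri_cycle T" and ?cb = "big_cycle n \<sigma> e"
  have lt: "length ?ct = 3" by (rule tri_len)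
  have arr: "(x,y) \<in> arrows n \<sigma>"
    unfolding arrows_def int_arrows_def cyc_arrows_def using T k lt by fastforce
  have "dW n \<sigma> (x,y) \<in> relations n \<sigma>" using arr nsd unfolding relations_def
    by (intro CollectI exI[of _ "(x,y)"]) auto
  then have "(dW n \<sigma> (x,y) :: qpath \<Rightarrow> 'k) \<in> jacobian_ideal n \<sigma>" unfolding jacobian_ideal_def by (rule gen_ideal.base)
  moreover have "(dW n \<sigma> (x,y) :: qpath \<Rightarrow> 'k) = (\<lambda>r. single (rotate (Suc k) ?ct) r - single (rotate (Suc m) ?cb) r)"
    by (rule dW_eq[OF T k e m])
  ultimately have E0: "Eqv K n \<sigma> (rotate (Suc k) ?ct) (rotate (Suc m) ?cb)"
    unfolding Eqv_def by simp
  have k3: "(k+1) mod 3 < 3" by simp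
  have xyT: "x \<in> edges n \<sigma>" "y \<in> edges n \<sigma>" using tri_sub[OF T] k k3 lt nth_mem[of k ?ct] nth_mem[of "(k+1) mod 3" ?ct] by auto
  have vxy: "valid_path n \<sigma> [x,y]" using xyT arr unfolding valid_path_def by (auto simp: less_Suc_eq)
  have kl: "k < length ?ct" using k lt by simp
  have A: "rotate (Suc k) ?ct \<noteq> []" "last (rotate (Suc k) ?ct) = ?ct!k" "hd (rotate (Suc k) ?ct) = ?ct ! (Suc k mod length ?ct)"
    using rot_facts[OF kl] by blast+
  have rt: "rotate (Suc k) ?ct \<noteq> [] \<and> last (rotate (Suc k) ?ct) = x \<and> hd (rotate (Suc k) ?ct) = y"
    using A k lt by (simp del: rotate_Suc)
  have ml: "m < length ?cb" using m by simp
  have B: "rotate (Suc m) ?cb \<noteq> []" "last (rotate (Suc m) ?cb) = ?cb!m" "hd (rotate (Suc m) ?cb) = ?cb ! (Suc m mod length ?cb)"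
    using rot_facts[OF ml] by blast+
  have rb: "rotate (Suc m) ?cb \<noteq> [] \<and> last (rotate (Suc m) ?cb) = x \<and> hd (rotate (Suc m) ?cb) = y"
    using B m by (simp del: rotate_Suc)
  have Ey: "Eqv K n \<sigma> (rotate (Suc k) ?ct @ [y]) (rotate (Suc m) ?cb @ [y])"
    using Eqv_rmul[OF E0 vxy] rt rb by simp
  have rk: "rotate ((k+1) mod 3) ?ct = rotate (Suc k) ?ct" using rotate_conv_mod[of "Suc k" ?ct] lt by simp
  have CEy: "CE K n \<sigma> y ?ct ?cb"
    apply (rule CE_intro[of ?ct ?cb "(k+1) mod 3" y "Suc m"])
    using tri_dist[OF T] big_dist k lt m Ey rk by auto
  have Ex: "Eqv K n \<sigma> ([x,y] @ tl (rotate (Suc k) ?ct)) ([x,y] @ tl (rotate (Suc m) ?cb))"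
    using Eqv_lmul[OF E0 vxy] rt rb by simp
  have "[x,y] @ tl (rotate (Suc k) ?ct) = rotate k ?ct @ [x]" using lm_path[of k ?ct x y] k lt rt by simp
  moreover have "[x,y] @ tl (rotate (Suc m) ?cb) = rotate m ?cb @ [x]" using lm_path[of m ?cb x y] m rb by simp
  ultimately have Ex': "Eqv K n \<sigma> (rotate k ?ct @ [x]) (rotate m ?cb @ [x])" using Ex by simp
  have CEx: "CE K n \<sigma> x ?ct ?cb"
    apply (rule CE_intro[of ?ct ?cb k x m])
    using tri_dist[OF T] big_dist k lt m Ex' by auto
  show ?thesis using CEx CEy by simp
qed

lemma tri_edg: "(p,q,r) \<in> triangles n \<sigma> \<Longrightarrow> a \<in> {p,q,r} \<Longrightarrow> b \<in> {p,q,r} \<Longrightarrow> a \<noteq> b \<Longrightarrow> edg a b \<in> edges n \<sigma>"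
  by (auto simp: tri_mem edg_def)

lemma tri_set_fs: "(p,q,r) \<in> triangles n \<sigma> \<Longrightarrow> v \<in> set (tri_cycle (p,q,r)) \<Longrightarrow>
   fst v \<in> {p,q,r} \<and> snd v \<in> {p,q,r} \<and> fst v < snd v \<and> v = edg (fst v) (snd v)"
  by (auto simp: tri_mem tri_set edg_def)

lemma ext_diag:
  assumes t: "triangulation n \<sigma>" and e: "e \<in> ext_vertices n \<sigma>"
  shows "\<exists>z. z \<in> nb n \<sigma> e \<and> \<not> is_side n (edg e z)"
proof -
  obtain d where d: "d \<in> \<sigma>" "fst d = e \<or> snd d = e" using e unfolding ext_vertices_def by auto
  have dd: "is_diag n d" using d t unfolding triangulation_def by auto
  then have "fst d < snd d" "snd d < n" unfolding is_diag_def by auto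
  then have "\<exists>z. d = edg e z \<and> z < n"
  proof (cases "fst d = e")
    case True
    then show ?thesis using edg_fst_snd[of d] \<open>fst d < snd d\<close> \<open>snd d < n\<close> by metis
  next
    case False
    then have "snd d = e" using d(2) by simp
    then show ?thesis using edg_fst_snd[of d] edg_sym \<open>fst d < snd d\<close> \<open>snd d < n\<close> by (metis less_trans)
  qed
  then obtain z where z: "d = edg e z" "z < n" by blast
  then have "z \<in> nb n \<sigma> e" using d unfolding nb_def edges_def by auto
  moreover have "\<not> is_side n (edg e z)" using dd z unfolding is_diag_def by simp
  ultimately show ?thesis by blast
qed

lemma BT:
  fixes K :: "'k::field itself"
  assumes t: "triangulation n \<sigma>" and n3: "n \<ge> 3" and T: "T \<in> triangles n \<sigma>" and v: "v \<in> set (tri_cycle T)"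
    and e: "e \<in> ext_vertices n \<sigma>" and ev: "e = fst v \<or> e = snd v"
  shows "CE K n \<sigma> v (tri_cycle T) (big_cycle n \<sigma> e)"
proof -
  obtain p q r where pqr: "T = (p,q,r)" by (cases T) auto
  note T' = T[unfolded pqr]
  have o: "p < q" "q < r" "r < n" using T' tri_mem by auto
  have fs: "fst v \<in> {p,q,r} \<and> snd v \<in> {p,q,r} \<and> fst v < snd v \<and> v = edg (fst v) (snd v)"
    using tri_set_fs[OF T'] v pqr by simp
  have eT: "e \<in> {p,q,r}" using fs ev by auto
  obtain u w k where uwk: "k < 3" "tri_cycle (p,q,r) ! k = edg e u" "tri_cycle (p,q,r) ! ((k+1) mod 3) = edg e w"
    "kf n e u < kf n e w" "{e,u,w} = {p,q,r}" "e \<noteq> u" "e \<noteq> w" "u \<noteq> w"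
    using tri_pivot[OF T' eT] by blast
  have "e \<in> {p,q,r}" "u \<in> {p,q,r}" "w \<in> {p,q,r}" using uwk(5) by blast+
  then have lt: "e < n" "u < n" "w < n" using o by auto
  have uT: "u \<in> {p,q,r}" "w \<in> {p,q,r}" using uwk(5) by auto
  have un: "u \<in> nb n \<sigma> e" "w \<in> nb n \<sigma> e" using tri_edg[OF T'] uT eT uwk lt unfolding nb_def by auto
  have uwE: "edg u w \<in> edges n \<sigma>" using tri_edg[OF T'] uT uwk by auto
  have nob: "\<forall>y\<in>nb n \<sigma> e. \<not> (kf n e u < kf n e y \<and> kf n e y < kf n e w)"
    using tri_no_between[OF t uwk(8) uwk(6) uwk(7) lt(2,3,1) uwE uwk(4)] by blast
  obtain j where j: "Suc j < length (fan n \<sigma> e)" "fan n \<sigma> e ! j = u" "fan n \<sigma> e ! Suc j = w"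
    using fan_consec[OF lt(1) un uwk(4) nob] by blast
  have bj: "Suc j < length (big_cycle n \<sigma> e)" "big_cycle n \<sigma> e ! j = edg e u" "big_cycle n \<sigma> e ! Suc j = edg e w"
    using j unfolding big_cycle_def by auto
  have nsd: "edg e u \<notin> sides n \<or> edg e w \<notin> sides n"
  proof (rule ccontr)
    assume "\<not> ?thesis"
    then have s: "is_side n (edg e u)" "is_side n (edg e w)" unfolding sides_def by auto
    have ku: "kf n e u = 1" and kw: "kf n e w = n - 1"
      using side_kf[OF n3 lt(1) lt(2)] side_kf[OF n3 lt(1) lt(3)] s uwk(4,6,7) n3 by auto
    obtain z where z: "z \<in> nb n \<sigma> e" "\<not> is_side n (edg e z)" using ext_diag[OF t e] by blast
    have zp: "z \<noteq> e" "z < n" using nb_props[OF t z(1)] by auto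
    have "kf n e z \<noteq> 1" "kf n e z \<noteq> n - 1" using side_kf[OF n3 lt(1) zp(2)] zp z by auto
    moreover have "kf n e z \<ge> 1" using kf_nb_pos[OF t z(1)] .
    moreover have "kf n e z < n" using kf_lt[OF lt(1) zp(2)] .
    ultimately have "kf n e u < kf n e z \<and> kf n e z < kf n e w" using ku kw by auto
    then show False using nob z by blast
  qed
  have R: "CE K n \<sigma> (edg e u) (tri_cycle T) (big_cycle n \<sigma> e) \<and> CE K n \<sigma> (edg e w) (tri_cycle T) (big_cycle n \<sigma> e)"
    using rel_CE[OF t T, of k "edg e u" "edg e w" e j] uwk pqr e bj nsd by simp
  have "v = edg e u \<or> v = edg e w"
  proof -
    have "\<exists>x. x \<in> {p,q,r} \<and> x \<noteq> e \<and> v = edg e x"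
    proof (cases "e = fst v")
      case True then show ?thesis using fs by (intro exI[of _ "snd v"]) auto
    next
      case False then have "e = snd v" using ev by simp
      then show ?thesis using fs edg_sym[of "fst v" "snd v"] by (intro exI[of _ "fst v"]) auto
    qed
    then obtain x where x: "x \<in> {p,q,r}" "x \<noteq> e" "v = edg e x" by blast
    then have "x = u \<or> x = w" using uwk(5) by auto
    then show ?thesis using x by auto
  qed
  then show ?thesis using R by auto
qed


lemma v_in_big:
  assumes t: "triangulation n \<sigma>" and v: "v \<in> edges n \<sigma>" and e: "e = fst v \<or> e = snd v"
  shows "v \<in> set (big_cycle n \<sigma> e)"
proof -
  have b: "fst v < snd v" "snd v < n" using edges_bound[OF t v] by auto
  have ve: "v = edg (fst v) (snd v)" using edg_fst_snd b by simp
  show ?thesis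
  proof (cases "e = fst v")
    case True
    then have "snd v \<in> nb n \<sigma> e" using b v ve unfolding nb_def by simp
    then show ?thesis using big_set True ve by (metis image_eqI)
  next
    case False
    then have e2: "e = snd v" using e by simp
    then have "fst v \<in> nb n \<sigma> e" using b v ve edg_sym unfolding nb_def by (metis less_trans mem_Collect_eq)
    then show ?thesis using big_set e2 ve edg_sym by (metis image_eqI)
  qed
qed

lemma big_v_end: "v \<in> set (big_cycle n \<sigma> e) \<Longrightarrow> e = fst v \<or> e = snd v"
  unfolding big_set edg_def by (auto simp: min_def max_def split: if_splits)

lemma big_sub: "set (big_cycle n \<sigma> e) \<subseteq> edges n \<sigma>"
  unfolding big_set nb_def by auto

lemma tri_third:
  assumes T: "(p,q,r) \<in> triangles n \<sigma>" and v: "v \<in> set (tri_cycle (p,q,r))"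
  shows "\<exists>zz. zz \<noteq> fst v \<and> zz \<noteq> snd v \<and> zz < n \<and> edg (fst v) zz \<in> edges n \<sigma> \<and> {p,q,r} = {fst v, snd v, zz}"
proof -
  have o: "p < q" "q < r" "r < n" "(p,q) \<in> edges n \<sigma>" "(q,r) \<in> edges n \<sigma>" "(p,r) \<in> edges n \<sigma>" using T tri_mem by auto
  have "v = (q,r) \<or> v = (p,q) \<or> v = (p,r)" using v tri_set by auto
  then show ?thesis
  proof (elim disjE)
    assume "v = (q,r)" then show ?thesis using o by (intro exI[of _ p]) (auto simp: edg_def)
  next
    assume "v = (p,q)" then show ?thesis using o by (intro exI[of _ r]) (auto simp: edg_def)
  next
    assume "v = (p,r)" then show ?thesis using o by (intro exI[of _ q]) (auto simp: edg_def)
  qed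
qed

lemma tri_det:
  assumes "(p,q,r) \<in> triangles n \<sigma>" "(p',q',r') \<in> triangles n \<sigma>" "{p,q,r} = {p',q',r'}"
  shows "(p,q,r) = (p',q',r')"
proof -
  have o: "p < q" "q < r" "p' < q'" "q' < r'" using assms(1,2) tri_mem by auto
  have a: "p \<in> {p',q',r'}" "q \<in> {p',q',r'}" "r \<in> {p',q',r'}" "p' \<in> {p,q,r}" "q' \<in> {p,q,r}" "r' \<in> {p,q,r}"
    using assms(3) by blast+
  from a o show ?thesis by auto
qed

lemma tri_unique:
  assumes t: "triangulation n \<sigma>" and n3: "n \<ge> 3" and ne: "fst v \<notin> ext_vertices n \<sigma>"
    and T1: "T1 \<in> triangles n \<sigma>" and T2: "T2 \<in> triangles n \<sigma>"
    and v1: "v \<in> set (tri_cycle T1)" and v2: "v \<in> set (tri_cycle T2)"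
  shows "T1 = T2"
proof -
  obtain p q r where P: "T1 = (p,q,r)" by (cases T1) auto
  obtain p' q' r' where P': "T2 = (p',q',r')" by (cases T2) auto
  have vE0: "v \<in> edges n \<sigma>" using tri_sub[OF T1] v1 by auto
  have vb: "fst v < snd v" "snd v < n" using edges_bound[OF t vE0] by auto
  let ?i = "fst v" and ?j = "snd v"
  have nots: "\<And>zz. zz < n \<Longrightarrow> edg ?i zz \<in> edges n \<sigma> \<Longrightarrow> edg ?i zz \<notin> \<sigma>"
  proof
    fix zz assume "zz < n" "edg ?i zz \<in> edges n \<sigma>" "edg ?i zz \<in> \<sigma>"
    moreover have "fst (edg ?i zz) = ?i \<or> snd (edg ?i zz) = ?i" by (simp add: edg_def min_def max_def)
    ultimately have "?i \<in> ext_vertices n \<sigma>" using vb unfolding ext_vertices_def by auto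
    then show False using ne by simp
  qed
  have side: "\<And>zz. zz < n \<Longrightarrow> zz \<noteq> ?i \<Longrightarrow> edg ?i zz \<in> edges n \<sigma> \<Longrightarrow> kf n ?i zz = 1 \<or> kf n ?i zz = n - 1"
  proof -
    fix zz assume o: "zz < n" "zz \<noteq> ?i" "edg ?i zz \<in> edges n \<sigma>"
    then have "is_side n (edg ?i zz)" using nots[OF o(1,3)] unfolding edges_def by auto
    then show "kf n ?i zz = 1 \<or> kf n ?i zz = n - 1" using side_kf[OF n3 _ o(1)] o vb by (metis less_trans)
  qed
  have vE: "v \<in> edges n \<sigma>" using tri_sub[OF T1] v1 by auto
  have kj: "kf n ?i ?j = 1 \<or> kf n ?i ?j = n - 1"
    using side[OF vb(2)] vb vE edg_fst_snd[of v] by simp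
  obtain o1 where o1: "o1 \<noteq> ?i" "o1 \<noteq> ?j" "o1 < n" "edg ?i o1 \<in> edges n \<sigma>" "{p,q,r} = {?i, ?j, o1}"
    using tri_third[of p q r n \<sigma> v] T1 v1 P by auto
  obtain o2 where o2: "o2 \<noteq> ?i" "o2 \<noteq> ?j" "o2 < n" "edg ?i o2 \<in> edges n \<sigma>" "{p',q',r'} = {?i, ?j, o2}"
    using tri_third[of p' q' r' n \<sigma> v] T2 v2 P' by auto
  have i_n: "?i < n" using vb by simp
  have k1: "kf n ?i o1 \<noteq> kf n ?i ?j" "kf n ?i o2 \<noteq> kf n ?i ?j"
    using kf_inj[OF i_n] o1 o2 vb by metis+
  have "kf n ?i o1 = kf n ?i o2" using side[OF o1(3,1,4)] side[OF o2(3,1,4)] kj k1 n3 by auto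
  then have "o1 = o2" using kf_inj[OF i_n o1(3) o2(3)] by simp
  then have "{p,q,r} = {p',q',r'}" using o1 o2 by simp
  then show ?thesis using tri_det T1 T2 P P' by simp
qed

lemma TT:
  fixes K :: "'k::field itself"
  assumes t: "triangulation n \<sigma>" and n3: "n \<ge> 3"
    and T1: "T1 \<in> triangles n \<sigma>" and T2: "T2 \<in> triangles n \<sigma>"
    and v1: "v \<in> set (tri_cycle T1)" and v2: "v \<in> set (tri_cycle T2)"
  shows "CE K n \<sigma> v (tri_cycle T1) (tri_cycle T2)"
proof -
  have vE: "v \<in> edges n \<sigma>" using tri_sub[OF T1] v1 by auto
  have viaB: "CE K n \<sigma> v (tri_cycle T1) (tri_cycle T2)" if e: "e \<in> ext_vertices n \<sigma>" "e = fst v \<or> e = snd v" for e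
  proof -
    have a: "CE K n \<sigma> v (tri_cycle T1) (big_cycle n \<sigma> e)" using BT[OF t n3 T1 v1 e] .
    have b: "CE K n \<sigma> v (big_cycle n \<sigma> e) (tri_cycle T2)" using CE_sym[OF BT[OF t n3 T2 v2 e]] .
    show ?thesis using CE_trans[OF a b v_in_big[OF t vE e(2)]] .
  qed
  show ?thesis
  proof (cases "fst v \<in> ext_vertices n \<sigma>")
    case True then show ?thesis using viaB by blast
  next
    case False
    then have "T1 = T2" using tri_unique[OF t n3 False T1 T2 v1 v2] by simp
    then show ?thesis using CE_refl[OF tri_dist[OF T1]] by simp
  qed
qed

lemma mk_tri:
  assumes "a \<noteq> b" "b \<noteq> c" "a \<noteq> c" "a < n" "b < n" "c < n"
    "edg a b \<in> edges n \<sigma>" "edg b c \<in> edges n \<sigma>" "edg a c \<in> edges n \<sigma>"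
  shows "\<exists>T\<in>triangles n \<sigma>. set (tri_cycle T) = {edg a b, edg b c, edg a c}"
proof -
  have s: "\<And>p q r. p < q \<Longrightarrow> q < r \<Longrightarrow> r < n \<Longrightarrow> (p,q) \<in> edges n \<sigma> \<Longrightarrow> (q,r) \<in> edges n \<sigma> \<Longrightarrow> (p,r) \<in> edges n \<sigma>
     \<Longrightarrow> (p,q,r) \<in> triangles n \<sigma> \<and> set (tri_cycle (p,q,r)) = {(p,q),(q,r),(p,r)}"
    by (auto simp: tri_mem tri_set)
  consider "a < b" "b < c" | "a < c" "c < b" | "b < a" "a < c" | "b < c" "c < a" | "c < a" "a < b" | "c < b" "b < a"
    using assms(1-3) by linarith
  then show ?thesis
  proof cases
    case 1 then show ?thesis using s[of a b c] assms by (auto simp: edg_def)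
  next
    case 2 then show ?thesis using s[of a c b] assms by (auto simp: edg_def)
  next
    case 3 then show ?thesis using s[of b a c] assms by (auto simp: edg_def)
  next
    case 4 then show ?thesis using s[of b c a] assms by (auto simp: edg_def)
  next
    case 5 then show ?thesis using s[of c a b] assms by (auto simp: edg_def)
  next
    case 6 then show ?thesis using s[of c b a] assms by (auto simp: edg_def)
  qed
qed


lemma exists_tri:
  assumes t: "triangulation n \<sigma>" and n3: "n \<ge> 3" and e: "e < n" and j: "j \<in> nb n \<sigma> e"
  shows "\<exists>T\<in>triangles n \<sigma>. edg e j \<in> set (tri_cycle T)"
proof -
  let ?f = "fan n \<sigma> e"
  obtain a where a: "a < length ?f" "?f ! a = j" using j fan_set by (metis in_set_conv_nth)
  have l2: "length ?f \<ge> 2"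
  proof (rule ccontr)
    assume "\<not> length ?f \<ge> 2"
    then have "length ?f \<le> 1" by simp
    moreover have "nxt n e \<in> set ?f" "prv n e \<in> set ?f" using nxt_prv_nb[OF n3 e] fan_set by auto
    ultimately have "nxt n e = prv n e"
      by (metis in_set_conv_nth less_one le_neq_implies_less less_le_trans)
    then show False using kf_nxt[OF n3 e] kf_prv[OF n3 e] n3 by simp
  qed
  obtain b where b: "Suc b < length ?f" "?f ! b = j \<or> ?f ! Suc b = j"
  proof (cases "Suc a < length ?f")
    case True then show ?thesis using that a by blast
  next
    case False
    then have "a = length ?f - 1" "a \<ge> 1" using a l2 by auto
    then have s: "Suc (a - 1) = a" by simp
    show ?thesis by (rule that[of "a - 1"]) (use s a in auto)
  qed
  define u where "u = ?f ! b"
  define w where "w = ?f ! Suc b"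
  have un: "u \<in> nb n \<sigma> e" "w \<in> nb n \<sigma> e" unfolding u_def w_def using b(1) fan_set
    by (metis nth_mem Suc_lessD)+
  have k: "kf n e u < kf n e w" unfolding u_def w_def using fan_strict[OF e, of b "Suc b" \<sigma>] b by simp
  have nob: "\<forall>y\<in>nb n \<sigma> e. \<not> (kf n e u < kf n e y \<and> kf n e y < kf n e w)"
    unfolding u_def w_def using fan_consec2[OF e b(1)] by blast
  have uw: "edg u w \<in> edges n \<sigma>" using fan_tri[OF t e un k nob] .
  have pu: "u \<noteq> e" "u < n" "edg e u \<in> edges n \<sigma>" using nb_props[OF t un(1)] by auto
  have pw: "w \<noteq> e" "w < n" "edg e w \<in> edges n \<sigma>" using nb_props[OF t un(2)] by auto
  have "u \<noteq> w" using k by auto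
  then obtain T where T: "T \<in> triangles n \<sigma>" "set (tri_cycle T) = {edg e u, edg u w, edg e w}"
    using mk_tri[of e u w n \<sigma>] pu pw uw e by auto
  have "edg e j = edg e u \<or> edg e j = edg e w" using b u_def w_def by auto
  then show ?thesis using T by auto
qed

lemma BB:
  fixes K :: "'k::field itself"
  assumes t: "triangulation n \<sigma>" and n3: "n \<ge> 3" and e1: "e1 \<in> ext_vertices n \<sigma>" and e2: "e2 \<in> ext_vertices n \<sigma>"
    and v1: "v \<in> set (big_cycle n \<sigma> e1)" and v2: "v \<in> set (big_cycle n \<sigma> e2)"
  shows "CE K n \<sigma> v (big_cycle n \<sigma> e1) (big_cycle n \<sigma> e2)"
proof (cases "e1 = e2")
  case True then show ?thesis using CE_refl[OF big_dist] by simp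
next
  case False
  have vE: "v \<in> edges n \<sigma>" using big_sub v1 by auto
  have vb: "fst v < snd v" "snd v < n" using edges_bound[OF t vE] by auto
  have jn: "snd v \<in> nb n \<sigma> (fst v)" using vb vE edg_fst_snd[of v] unfolding nb_def by simp
  obtain T where T: "T \<in> triangles n \<sigma>" "edg (fst v) (snd v) \<in> set (tri_cycle T)"
    using exists_tri[OF t n3 _ jn] vb by auto
  have vT: "v \<in> set (tri_cycle T)" using T edg_fst_snd[of v] vb by simp
  have a: "CE K n \<sigma> v (tri_cycle T) (big_cycle n \<sigma> e1)" using BT[OF t n3 T(1) vT e1 big_v_end[OF v1]] .
  have b: "CE K n \<sigma> v (tri_cycle T) (big_cycle n \<sigma> e2)" using BT[OF t n3 T(1) vT e2 big_v_end[OF v2]] .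
  show ?thesis using CE_trans[OF CE_sym[OF a] b vT] .
qed

lemma MC:
  fixes K :: "'k::field itself"
  assumes t: "triangulation n \<sigma>" and n3: "n \<ge> 3" and c1: "c1 \<in> min_cycles n \<sigma>" and c2: "c2 \<in> min_cycles n \<sigma>"
    and v1: "v \<in> set c1" and v2: "v \<in> set c2"
  shows "CE K n \<sigma> v c1 c2"
proof -
  from c1 consider T1 where "T1 \<in> triangles n \<sigma>" "c1 = tri_cycle T1" | e1 where "e1 \<in> ext_vertices n \<sigma>" "c1 = big_cycle n \<sigma> e1"
    unfolding min_cycles_def by blast
  then show ?thesis
  proof cases
    case (1 T1)
    from c2 consider T2 where "T2 \<in> triangles n \<sigma>" "c2 = tri_cycle T2" | e2 where "e2 \<in> ext_vertices n \<sigma>" "c2 = big_cycle n \<sigma> e2"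
      unfolding min_cycles_def by blast
    then show ?thesis
    proof cases
      case (1 T2) then show ?thesis using TT[OF t n3] \<open>T1 \<in> _\<close> \<open>c1 = _\<close> v1 v2 by blast
    next
      case (2 e2) then show ?thesis using BT[OF t n3] \<open>T1 \<in> _\<close> \<open>c1 = _\<close> v1 v2 big_v_end by blast
    qed
  next
    case (2 e1)
    from c2 consider T2 where "T2 \<in> triangles n \<sigma>" "c2 = tri_cycle T2" | e2 where "e2 \<in> ext_vertices n \<sigma>" "c2 = big_cycle n \<sigma> e2"
      unfolding min_cycles_def by blast
    then show ?thesis
    proof cases
      case (1 T2) then show ?thesis using CE_sym[OF BT[OF t n3 \<open>T2 \<in> _\<close> _ \<open>e1 \<in> _\<close>]] \<open>c1 = _\<close> v1 v2 big_v_end by blast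
    next
      case (2 e2) then show ?thesis using BB[OF t n3] \<open>e1 \<in> _\<close> \<open>c1 = _\<close> v1 v2 by blast
    qed
  qed
qed

lemma VE:
  fixes K :: "'k::field itself"
  assumes t: "triangulation n \<sigma>" and n3: "n \<ge> 3"
    and p1: "is_min_cycle_at n \<sigma> v p1" and p2: "is_min_cycle_at n \<sigma> v p2"
  shows "Eqv K n \<sigma> p1 p2"
proof -
  obtain c1 k1 where a: "c1 \<in> min_cycles n \<sigma>" "k1 < length c1" "c1 ! k1 = v" "p1 = rotate k1 c1 @ [v]"
    using p1 unfolding is_min_cycle_at_def by blast
  obtain c2 k2 where b: "c2 \<in> min_cycles n \<sigma>" "k2 < length c2" "c2 ! k2 = v" "p2 = rotate k2 c2 @ [v]"
    using p2 unfolding is_min_cycle_at_def by blast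
  have "CE K n \<sigma> v c1 c2" using MC[OF t n3 a(1) b(1)] a b nth_mem by metis
  then show ?thesis using a b unfolding CE_def by blast
qed

lemma AC:
  assumes t: "triangulation n \<sigma>" and n3: "n \<ge> 3" and ab: "(a,b) \<in> arrows n \<sigma>"
  shows "\<exists>c\<in>min_cycles n \<sigma>. \<exists>k<length c. c!k = a \<and> c!((k+1) mod length c) = b"
proof -
  have "(a,b) \<in> int_arrows n \<sigma> \<or> (a,b) \<in> ext_arrows n \<sigma>" using ab unfolding arrows_def by auto
  then show ?thesis
  proof
    assume "(a,b) \<in> int_arrows n \<sigma>"
    then obtain T where "T \<in> triangles n \<sigma>" "(a,b) \<in> cyc_arrows (tri_cycle T)" unfolding int_arrows_def by blast
    then show ?thesis unfolding cyc_arrows_def min_cycles_def by blast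
  next
    assume "(a,b) \<in> ext_arrows n \<sigma>"
    then obtain i where i: "i \<in> ext_vertices n \<sigma>" "a = edg (prv n i) i" "b = edg i (nxt n i)"
      unfolding ext_arrows_def by blast
    have il: "i < n" using i unfolding ext_vertices_def by auto
    note ff = fan_first_last[OF t n3 il]
    let ?c = "big_cycle n \<sigma> i"
    have lc: "length ?c = length (fan n \<sigma> i)" "length ?c > 0" using ff unfolding big_cycle_def by auto
    have "?c ! (length ?c - 1) = a" using ff lc i edg_sym unfolding big_cycle_def by auto
    moreover have "?c ! ((length ?c - 1 + 1) mod length ?c) = b" using ff lc i unfolding big_cycle_def by auto
    moreover have "?c \<in> min_cycles n \<sigma>" using i unfolding min_cycles_def by auto
    ultimately show ?thesis using lc by (metis diff_less zero_less_one)
  qed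
qed

theorem proposition2p12:
  fixes n :: nat and \<sigma> :: "edge set" and Cyc :: "edge \<Rightarrow> qpath"
  assumes "n \<ge> 3" and "triangulation n \<sigma>"
    and "\<forall>v\<in>edges n \<sigma>. is_min_cycle_at n \<sigma> v (Cyc v)"
  shows "\<forall>x \<in> (KQ n \<sigma> :: (qpath \<Rightarrow> 'k::field) set).
           (let C = (\<lambda>r. \<Sum>v\<in>edges n \<sigma>. single (Cyc v) r :: 'k)
            in (\<lambda>r. pmul C x r - pmul x C r)) \<in> jacobian_ideal n \<sigma>"
proof
  fix x :: "qpath \<Rightarrow> 'k" assume x: "x \<in> KQ n \<sigma>"
  have key: "\<And>q. valid_path n \<sigma> q \<Longrightarrow> Eqv TYPE('k) n \<sigma> (Cyc (hd q) @ tl q) (q @ tl (Cyc (last q)))"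
  proof -
    fix q assume q: "valid_path n \<sigma> q"
    have VE': "\<And>v p1 p2. v \<in> edges n \<sigma> \<Longrightarrow> is_min_cycle_at n \<sigma> v p1 \<Longrightarrow> is_min_cycle_at n \<sigma> v p2 \<Longrightarrow> Eqv TYPE('k) n \<sigma> p1 p2"
      using VE[OF assms(2,1)] by blast
    show "Eqv TYPE('k) n \<sigma> (Cyc (hd q) @ tl q) (q @ tl (Cyc (last q)))"
      using path_key[OF assms(3) VE' AC[OF assms(2,1)] q] .
  qed
  show "(let C = (\<lambda>r. \<Sum>v\<in>edges n \<sigma>. single (Cyc v) r :: 'k)
            in (\<lambda>r. pmul C x r - pmul x C r)) \<in> jacobian_ideal n \<sigma>"
    by (rule main_from[OF assms(2,3) key x])
qed


end
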